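(* Let $\{(\mathcal{T}^h,\Sigma^h)\}_{h>0}$ be a family of Cartesian tessellations of $\Omega$ with cubic cells of edge length $h$. Let $\{\rho^h\in\mathcal{P}(\mathcal{T}^h)\}_{h>0}$ satisfy $\hat\rho^h\rightharpoonup^*\rho$ weakly-$*$ in $\mathcal{P}(\Omega)$. If $\{\varphi^h:\mathcal{T}^h\to\mathbb{R}\}_{h>0}$ is such that for some $\varphi\in C^1_b(\Omega)$, $\varphi^h_L-\varphi^h_K=\nabla\varphi(x_K)\cdot(x_L-x_K)+o(h)$ uniformly over $(K,L)\in\Sigma^h$, then \[ \lim_{h\to0}\mathcal{R}^*_{\mathrm{up},h}(\rho^h,\overline\nabla\varphi^h)=\frac12\int_\Omega|\nabla\varphi|^2\,\mathrm{d}\rho. \] Consequently, if the interaction potential $W$ satisfies (C$^1$), then $\lim_{h\to0}\mathcal{D}_{\mathrm{up},h}(\rho^h)=\frac12\int_\Omega|\nabla\mathsf{Q}(\rho)|^2\mathrm{d}\rho$.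
   Context: $\Omega\subset\mathbb{R}^d$ open bounded convex. $\mathcal{T}^h$: the cubes of a Cartesian grid of edge length $h$ covering $\Omega$; $\Sigma^h$: ordered pairs of cubes sharing a $(d-1)$-dimensional face $(K|L)$; $x_K$ the center of $K$; $\tau_{K|L}=|(K|L)|/|x_L-x_K|$; $\overline\nabla\varphi(K,L)=\varphi(L)-\varphi(K)$. $\mathrm{d}\hat\rho^h/\mathrm{d}\mathcal{L}^d=\sum_K\frac{\rho^h_K}{|K|}\mathbb{1}_K$; $u_K=\rho_K/|K|$. $\mathcal{R}^*_{\mathrm{up},h}(\rho,\xi)=\sum_{(K,L)\in\Sigma^h}\tau_{K|L}\big(u_K|\xi^+_{K|L}/2|^2+u_L|\xi^-_{K|L}/2|^2\big)$ with $x^\pm\ge0$ positive/negative parts. $V\in\mathrm{Lip}\cap C^1(\mathbb{R}^d)$ bounded below; $W\ge0$, $W(x)=W(-x)$; (C$^1$): $W\in\mathrm{Lip}(\mathbb{R}^d)\cap C^1(\mathbb{R}^d)$. $q_{K|L}=V(x_L)-V(x_K)+\sum_M\rho_M(W(x_L-x_M)-W(x_K-x_M))$; $\mathcal{D}_{\mathrm{up},h}(\rho)=\sum_{\Sigma^h}\tau_{K|L}(u_K|q^+_{K|L}/2|^2+u_L|q^-_{K|L}/2|^2)$; $\mathsf{Q}(\rho)=V+W*\rho$. *)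

theory Defs
  imports "HOL-Probability.Probability"
begin

(* Cartesian grid of edge length h, offset a; cells are indexed by k in Z^d.
   Cell k is the closed cube  a + h*(k + [0,1]^d). *)
definition cube :: "real \<Rightarrow> real^'d \<Rightarrow> int^'d \<Rightarrow> (real^'d) set" where
  "cube h a k = cbox (a + h *\<^sub>R (\<chi> i. real_of_int (k$i)))
                      (a + h *\<^sub>R (\<chi> i. real_of_int (k$i) + 1))"

definition center :: "real \<Rightarrow> real^'d \<Rightarrow> int^'d \<Rightarrow> real^'d" where
  "center h a k = a + h *\<^sub>R (\<chi> i. real_of_int (k$i) + 1/2)"

definition cells :: "(real^'d) set \<Rightarrow> real \<Rightarrow> real^'d \<Rightarrow> (int^'d) set" where
  "cells \<Omega> h a = {k. interior (cube h a k) \<inter> \<Omega> \<noteq> {}}"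

(* Sigma^h: ordered pairs of cells sharing a (d-1)-dimensional face *)
definition edges :: "(real^'d) set \<Rightarrow> real \<Rightarrow> real^'d \<Rightarrow> ((int^'d) \<times> (int^'d)) set" where
  "edges \<Omega> h a = {(k,l). k \<in> cells \<Omega> h a \<and> l \<in> cells \<Omega> h a \<and>
                         (\<Sum>i\<in>UNIV. \<bar>l$i - k$i\<bar>) = 1}"

(* tau_{K|L} = |(K|L)| / |x_L - x_K|, the face (K|L) being a (d-1)-cube of edge h *)
definition tau :: "real \<Rightarrow> real^'d \<Rightarrow> int^'d \<Rightarrow> int^'d \<Rightarrow> real" where
  "tau h a k l = h ^ (CARD('d) - 1) / dist (center h a k) (center h a l)"

definition posp :: "real \<Rightarrow> real" where "posp x = max x 0"
definition negp :: "real \<Rightarrow> real" where "negp x = max (- x) 0"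

definition ucell :: "real \<Rightarrow> real^'d \<Rightarrow> (int^'d \<Rightarrow> real) \<Rightarrow> int^'d \<Rightarrow> real" where
  "ucell h a \<rho> k = \<rho> k / measure lborel (cube h a k)"

definition rhohat :: "(real^'d) set \<Rightarrow> real \<Rightarrow> real^'d \<Rightarrow> (int^'d \<Rightarrow> real) \<Rightarrow> (real^'d) measure" where
  "rhohat \<Omega> h a \<rho> = density lborel
     (\<lambda>x. ennreal (\<Sum>k\<in>cells \<Omega> h a. ucell h a \<rho> k * indicator (cube h a k) x))"

definition gradbar :: "(int^'d \<Rightarrow> real) \<Rightarrow> int^'d \<Rightarrow> int^'d \<Rightarrow> real" where
  "gradbar \<phi> k l = \<phi> l - \<phi> k"

definition Rstar :: "(real^'d) set \<Rightarrow> real \<Rightarrow> real^'d \<Rightarrow> (int^'d \<Rightarrow> real)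
                      \<Rightarrow> (int^'d \<Rightarrow> int^'d \<Rightarrow> real) \<Rightarrow> real" where
  "Rstar \<Omega> h a \<rho> \<xi> = (\<Sum>(k,l)\<in>edges \<Omega> h a.
      tau h a k l * (ucell h a \<rho> k * (posp (\<xi> k l) / 2)\<^sup>2
                    + ucell h a \<rho> l * (negp (\<xi> k l) / 2)\<^sup>2))"

definition qflux :: "(real^'d \<Rightarrow> real) \<Rightarrow> (real^'d \<Rightarrow> real) \<Rightarrow> (real^'d) set \<Rightarrow> real \<Rightarrow> real^'d
                      \<Rightarrow> (int^'d \<Rightarrow> real) \<Rightarrow> int^'d \<Rightarrow> int^'d \<Rightarrow> real" where
  "qflux V W \<Omega> h a \<rho> k l = V (center h a l) - V (center h a k)
     + (\<Sum>m\<in>cells \<Omega> h a. \<rho> m * (W (center h a l - center h a m) - W (center h a k - center h a m)))"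

definition Dup :: "(real^'d \<Rightarrow> real) \<Rightarrow> (real^'d \<Rightarrow> real) \<Rightarrow> (real^'d) set \<Rightarrow> real \<Rightarrow> real^'d
                    \<Rightarrow> (int^'d \<Rightarrow> real) \<Rightarrow> real" where
  "Dup V W \<Omega> h a \<rho> = Rstar \<Omega> h a \<rho> (qflux V W \<Omega> h a \<rho>)"

definition grad :: "(real^'d \<Rightarrow> real) \<Rightarrow> real^'d \<Rightarrow> real^'d" where
  "grad f x = (\<chi> i. frechet_derivative f (at x) (axis i 1))"

definition C1fun :: "(real^'d \<Rightarrow> real) \<Rightarrow> bool" where
  "C1fun f \<longleftrightarrow> (\<forall>x. f differentiable (at x)) \<and> continuous_on UNIV (grad f)"

definition Qpot :: "(real^'d \<Rightarrow> real) \<Rightarrow> (real^'d \<Rightarrow> real) \<Rightarrow> (real^'d) measure \<Rightarrow> real^'d \<Rightarrow> real" where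
  "Qpot V W \<mu> x = V x + (\<integral>y. W (x - y) \<partial>\<mu>)"

end

theory Submission
  imports Defs
begin

definition ivec :: "int^'d \<Rightarrow> real^'d" where
  "ivec z = (\<chi> i. real_of_int (z$i))"

lemma center_diff: "center h a l - center h a k = h *\<^sub>R ivec (l - k)"
  by (simp add: center_def ivec_def vec_eq_iff algebra_simps)

lemma int_abs_le1_sq: "\<bar>z::int\<bar> \<le> 1 \<Longrightarrow> z * z = \<bar>z\<bar>"
  by (cases "z = 0"; cases "z = 1"; cases "z = -1") auto

lemma ivec_norm_sq:
  fixes z :: "int^'d"
  assumes "(\<Sum>i\<in>UNIV. \<bar>z$i\<bar>) = 1"
  shows "(\<Sum>i\<in>UNIV. (real_of_int (z$i))\<^sup>2) = 1"
proof -
  have le: "\<bar>z$i\<bar> \<le> 1" for i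
    using member_le_sum[of i UNIV "\<lambda>i. \<bar>z$i\<bar>"] assms by auto
  have "(\<Sum>i\<in>UNIV. (z$i) * (z$i)) = 1"
    using assms int_abs_le1_sq[OF le] by simp
  then have "real_of_int (\<Sum>i\<in>UNIV. (z$i) * (z$i)) = 1" by simp
  then show ?thesis by (simp add: power2_eq_square)
qed

lemma ivec_norm:
  fixes z :: "int^'d"
  assumes "(\<Sum>i\<in>UNIV. \<bar>z$i\<bar>) = 1"
  shows "norm (ivec z) = 1"
  using ivec_norm_sq[OF assms] by (simp add: norm_vec_def L2_set_def ivec_def)

lemma l1_one_cases:
  fixes z :: "int^'d"
  assumes "(\<Sum>i\<in>UNIV. \<bar>z$i\<bar>) = 1"
  shows "\<exists>i s. s \<in> {1,-1} \<and> z = s *s axis i 1"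
proof -
  obtain i where i: "z$i \<noteq> 0"
    using assms by (metis (mono_tags, lifting) abs_zero sum.neutral zero_neq_one)
  have le: "\<bar>z$j\<bar> \<le> 1" for j
    using member_le_sum[of j UNIV "\<lambda>i. \<bar>z$i\<bar>"] assms by auto
  have zi: "\<bar>z$i\<bar> = 1" using i le[of i] by auto
  have "(\<Sum>j\<in>UNIV. \<bar>z$j\<bar>) = \<bar>z$i\<bar> + (\<Sum>j\<in>UNIV-{i}. \<bar>z$j\<bar>)"
    by (simp add: sum.remove)
  then have "(\<Sum>j\<in>UNIV-{i}. \<bar>z$j\<bar>) = 0" using assms zi by simp
  then have "\<forall>j\<in>UNIV-{i}. \<bar>z$j\<bar> = 0"
    by (subst (asm) sum_nonneg_eq_0_iff) auto
  then have "z = (z$i) *s axis i 1"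
    by (auto simp: vec_eq_iff axis_def)
  moreover have "z$i \<in> {1,-1}" using zi by auto
  ultimately show ?thesis by blast
qed

definition nbrs :: "int^'d \<Rightarrow> (int^'d) set" where
  "nbrs k = {l. (\<Sum>i\<in>UNIV. \<bar>l$i - k$i\<bar>) = 1}"

lemma nbrs_image: fixes k :: "int^'d" shows "nbrs k = (\<lambda>(i,s). k + s *s axis i 1) ` (UNIV \<times> {1,-1})"
proof
  show "nbrs k \<subseteq> (\<lambda>(i,s). k + s *s axis i 1) ` (UNIV \<times> {1,-1})"
  proof
    fix l assume "l \<in> nbrs k"
    then have "(\<Sum>i\<in>UNIV. \<bar>(l-k)$i\<bar>) = 1" by (simp add: nbrs_def)
    then obtain i s where "s \<in> {1,-1}" "l - k = s *s axis i 1" using l1_one_cases by blast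
    then show "l \<in> (\<lambda>(i,s). k + s *s axis i 1) ` (UNIV \<times> {1,-1})"
      by (auto intro!: image_eqI[where x="(i,s)"] simp: algebra_simps)
  qed
next
  have "(\<Sum>j\<in>UNIV. \<bar>(s *s axis i 1 :: int^'d)$j\<bar>) = 1" if "s \<in> {1,-1}" for s :: int and i
  proof -
    have "(\<Sum>j\<in>UNIV. \<bar>(s *s axis i 1 :: int^'d)$j\<bar>) = (\<Sum>j\<in>UNIV. if j = i then 1 else 0::int)"
      using that by (intro sum.cong) (auto simp: axis_def)
    also have "\<dots> = 1" by simp
    finally show ?thesis .
  qed
  note * = this
  show "(\<lambda>(i,s). k + s *s axis i 1) ` (UNIV \<times> {1,-1}) \<subseteq> nbrs k"
  proof (clarify)
    fix i :: 'd and s :: int assume "s \<in> {1,-1}"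
    then show "k + s *s axis i 1 \<in> nbrs k"
      using *[of s i] unfolding nbrs_def by simp
  qed
qed

lemma inj_nbrs: fixes k :: "int^'d" shows "inj_on (\<lambda>(i,s). k + s *s axis i (1::int)) (UNIV \<times> {1,-1})"
proof (rule inj_onI, clarify)
  fix i j :: 'd and s t :: int
  assume s: "s \<in> {1::int,-1}" and t: "t \<in> {1::int,-1}"
    and eq: "k + s *s axis i 1 = k + t *s axis j 1"
  then have eq2: "s *s axis i 1 = (t *s axis j 1 :: int^'d)" by simp
  have "(s *s axis i 1 :: int^'d) $ i = s" by (simp add: axis_def)
  then have "(t *s axis j 1 :: int^'d) $ i = s" using eq2 by simp
  then have "i = j" using s by (auto simp: axis_def split: if_splits)
  then show "i = j \<and> s = t" using eq2 \<open>(t *s axis j 1 :: int^'d) $ i = s\<close> by (simp add: axis_def)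
qed

lemma finite_nbrs: "finite (nbrs k)" by (simp add: nbrs_image)
lemma card_nbrs: "card (nbrs (k::int^'d)) = 2 * CARD('d)"
  unfolding nbrs_image by (subst card_image[OF inj_nbrs]) (simp add: card_cartesian_product)

lemma ivec_axis: "ivec (s *s axis i 1 :: int^'d) = real_of_int s *\<^sub>R axis i 1"
  by (simp add: ivec_def vec_eq_iff axis_def)

lemma sum_nbrs_pos:
  fixes G :: "real^'d"
  shows "(\<Sum>l\<in>nbrs k. (posp (G \<bullet> ivec (l - k)))\<^sup>2) = (norm G)\<^sup>2"
proof -
  have "(\<Sum>l\<in>nbrs k. (posp (G \<bullet> ivec (l - k)))\<^sup>2)
      = (\<Sum>(i,s)\<in>UNIV \<times> {1,-1}. (posp (G \<bullet> ivec (s *s axis i 1)))\<^sup>2)"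
    unfolding nbrs_image by (subst sum.reindex[OF inj_nbrs]) (simp add: case_prod_unfold)
  also have "\<dots> = (\<Sum>i\<in>UNIV. (posp (G$i))\<^sup>2 + (posp (- G$i))\<^sup>2)"
    by (subst sum.cartesian_product[symmetric]) (simp add: ivec_axis inner_axis)
  also have "\<dots> = (\<Sum>i\<in>UNIV. (G$i)\<^sup>2)"
    by (intro sum.cong) (auto simp: posp_def max_def power2_eq_square)
  also have "\<dots> = (norm G)\<^sup>2"
    by (simp add: norm_vec_def L2_set_def sum_nonneg)
  finally show ?thesis .
qed

lemma cube_comp:
  assumes "h > 0" "x \<in> cube h a k"
  shows "\<bar>x$i - center h a k $ i\<bar> \<le> h/2"
proof -
  have "a$i + h * real_of_int (k$i) \<le> x$i" "x$i \<le> a$i + h * (real_of_int (k$i) + 1)"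
    using assms(2)[unfolded cube_def mem_box_cart(2)] by auto
  then have 1: "a$i + h * real_of_int (k$i) \<le> x$i" "x$i \<le> a$i + h * real_of_int (k$i) + h"
    by (simp_all add: algebra_simps)
  have 2: "center h a k $ i = a$i + h * real_of_int (k$i) + h/2" by (simp add: center_def algebra_simps)
  show ?thesis unfolding 2 abs_le_iff using 1 by linarith
qed

lemma norm_le_card_bound:
  fixes v :: "real^'d" and c :: real
  assumes "\<And>i. \<bar>v$i\<bar> \<le> c"
  shows "norm v \<le> real CARD('d) * c"
proof -
  have "norm v \<le> (\<Sum>i\<in>UNIV. \<bar>v$i\<bar>)" by (rule norm_le_l1_cart)
  also have "\<dots> \<le> (\<Sum>i\<in>(UNIV::'d set). c)" by (rule sum_mono) (use assms in auto)
  finally show ?thesis by simp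
qed

lemma cube_center_dist:
  fixes x :: "real^'d"
  assumes "h > 0" "x \<in> cube h a k"
  shows "norm (x - center h a k) \<le> real CARD('d) * h"
proof (rule norm_le_card_bound)
  fix i show "\<bar>(x - center h a k) $ i\<bar> \<le> h" using cube_comp[OF assms, of i] assms(1) by simp
qed

lemma center_in_box:
  assumes "h > 0"
  shows "center h a k \<in> box (a + h *\<^sub>R (\<chi> i. real_of_int (k$i))) (a + h *\<^sub>R (\<chi> i. real_of_int (k$i) + 1))"
  using assms by (auto simp: center_def mem_box_cart)

lemma center_in_cube: "h > 0 \<Longrightarrow> center h a k \<in> cube h a k"
  using center_in_box[of h a k] box_subset_cbox unfolding cube_def by blast

lemma interior_cube: "interior (cube h a k) = box (a + h *\<^sub>R (\<chi> i. real_of_int (k$i))) (a + h *\<^sub>R (\<chi> i. real_of_int (k$i) + 1))"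
  by (simp add: cube_def)

lemma measure_cube:
  assumes "h > 0"
  shows "measure lborel (cube h a (k::int^'d)) = h ^ CARD('d)"
proof -
  let ?l = "a + h *\<^sub>R (\<chi> i. real_of_int (k$i))" and ?u = "a + h *\<^sub>R (\<chi> i. real_of_int (k$i) + 1)"
  have ib: "(?u - ?l) \<bullet> b = h" if "b \<in> Basis" for b
    using that by (auto simp: Basis_vec_def inner_axis algebra_simps)
  have "?l \<bullet> b \<le> ?u \<bullet> b" if "b \<in> Basis" for b
  proof -
    have "(?u - ?l) \<bullet> b = ?u \<bullet> b - ?l \<bullet> b" by (rule inner_diff_left)
    with ib[OF that] assms show ?thesis by linarith
  qed
  then have "\<forall>b\<in>Basis. ?l \<bullet> b \<le> ?u \<bullet> b" by blast
  then have "measure lborel (cube h a k) = (\<Prod>b\<in>Basis. (?u - ?l) \<bullet> b)"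
    unfolding cube_def measure_lborel_cbox_eq by simp
  also have "\<dots> = (\<Prod>b\<in>(Basis::(real^'d) set). h)" by (rule prod.cong) (use ib in auto)
  also have "\<dots> = h ^ CARD('d)" by simp
  finally show ?thesis .
qed

lemma tendsto_0_by_eps:
  fixes g :: "'a \<Rightarrow> real"
  assumes "\<And>e. e > 0 \<Longrightarrow> eventually (\<lambda>x. \<bar>g x\<bar> \<le> e) F"
  shows "(g \<longlongrightarrow> 0) F"
proof (rule tendstoI)
  fix e :: real assume "e > 0"
  then have "eventually (\<lambda>x. \<bar>g x\<bar> \<le> e/2) F" using assms[of "e/2"] by simp
  then show "eventually (\<lambda>x. dist (g x) 0 < e) F"
    by eventually_elim (use \<open>e > 0\<close> in auto)
qed

lemma tendsto_by_eps:
  fixes g :: "'a \<Rightarrow> real"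
  assumes "\<And>e. e > 0 \<Longrightarrow> eventually (\<lambda>x. \<bar>g x - L\<bar> \<le> e) F"
  shows "(g \<longlongrightarrow> L) F"
proof -
  have "((\<lambda>x. g x - L) \<longlongrightarrow> 0) F" by (rule tendsto_0_by_eps) (use assms in auto)
  then have "((\<lambda>x. (g x - L) + L) \<longlongrightarrow> 0 + L) F" by (intro tendsto_add) auto
  then show ?thesis by simp
qed

locale setting = prob_space \<mu> for \<mu> :: "(real^'d) measure" +
  fixes \<Omega> :: "(real^'d) set" and a :: "real \<Rightarrow> real^'d" and \<rho>h :: "real \<Rightarrow> int^'d \<Rightarrow> real"
  assumes \<Omega>_open: "open \<Omega>" and \<Omega>_bdd: "bounded \<Omega>"
    and \<rho>_nn: "\<And>h k. h > 0 \<Longrightarrow> k \<in> cells \<Omega> h (a h) \<Longrightarrow> \<rho>h h k \<ge> 0"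
    and \<rho>_sum: "\<And>h. h > 0 \<Longrightarrow> (\<Sum>k\<in>cells \<Omega> h (a h). \<rho>h h k) = 1"
    and \<mu>_sets: "sets \<mu> = sets borel" and \<mu>_\<Omega>: "measure \<mu> \<Omega> = 1"
    and weak: "\<And>f :: real^'d \<Rightarrow> real. continuous_on UNIV f \<Longrightarrow> bounded (range f) \<Longrightarrow>
        ((\<lambda>h. \<integral>x. f x \<partial>(rhohat \<Omega> h (a h) (\<rho>h h))) \<longlongrightarrow> (\<integral>x. f x \<partial>\<mu>)) (at_right 0)"
begin

abbreviation "cl h \<equiv> cells \<Omega> h (a h)"
abbreviation "ctr h k \<equiv> center h (a h) k"

lemma finite_cl: "h > 0 \<Longrightarrow> finite (cl h)"
  using \<rho>_sum[of h] by (metis sum.infinite zero_neq_one)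

lemma finite_edges: "h > 0 \<Longrightarrow> finite (edges \<Omega> h (a h))"
  by (rule finite_subset[of _ "cl h \<times> cl h"]) (auto simp: edges_def finite_cl)

definition Rb :: real where "Rb = (SOME R. R > 0 \<and> \<Omega> \<subseteq> cball 0 R)"

lemma Rb: "Rb > 0" "\<Omega> \<subseteq> cball 0 Rb"
proof -
  obtain e x where "\<Omega> \<subseteq> cball x e" "0 \<le> e" using \<Omega>_bdd bounded_subset_cball by blast
  have "\<Omega> \<subseteq> cball 0 (norm x + e + 1)"
  proof
    fix y assume "y \<in> \<Omega>"
    then have "dist x y \<le> e" using \<open>\<Omega> \<subseteq> cball x e\<close> by auto
    moreover have "norm y \<le> norm x + norm (y - x)" using norm_triangle_sub[of y x] by simp
    ultimately show "y \<in> cball 0 (norm x + e + 1)" by (simp add: dist_norm norm_minus_commute)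
  qed
  moreover have "norm x + e + 1 > 0" using \<open>0 \<le> e\<close> norm_ge_zero[of x] by linarith
  ultimately have "\<exists>R. R > 0 \<and> \<Omega> \<subseteq> cball 0 R" by blast
  then have "Rb > 0 \<and> \<Omega> \<subseteq> cball 0 Rb" unfolding Rb_def by (rule someI_ex)
  then show "Rb > 0" "\<Omega> \<subseteq> cball 0 Rb" by auto
qed

abbreviation "K1 \<equiv> cball (0::real^'d) (Rb + real CARD('d))"

lemma cube_in_K1:
  assumes "0 < h" "h \<le> 1" "k \<in> cl h"
  shows "cube h (a h) k \<subseteq> K1"
proof
  fix x assume x: "x \<in> cube h (a h) k"
  obtain p where p: "p \<in> interior (cube h (a h) k)" "p \<in> \<Omega>" using assms(3) by (auto simp: cells_def)
  have pc: "p \<in> cube h (a h) k" using p(1) interior_subset by blast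
  have "norm (x - p) \<le> real CARD('d) * h"
  proof (rule norm_le_card_bound)
    fix i
    have "\<bar>x$i - ctr h k $ i\<bar> \<le> h/2" "\<bar>p$i - ctr h k $ i\<bar> \<le> h/2"
      using cube_comp[OF assms(1) x] cube_comp[OF assms(1) pc] by auto
    then show "\<bar>(x - p)$i\<bar> \<le> h" unfolding abs_le_iff by simp
  qed
  also have "\<dots> \<le> real CARD('d)" using assms by (simp add: mult_left_le)
  finally have "norm (x - p) \<le> real CARD('d)" .
  moreover have "norm p \<le> Rb" using p(2) Rb(2) by auto
  moreover have "norm x \<le> norm p + norm (x - p)" using norm_triangle_sub[of x p] by simp
  ultimately show "x \<in> K1" by simp
qed

lemma ctr_in_K1: "0 < h \<Longrightarrow> h \<le> 1 \<Longrightarrow> k \<in> cl h \<Longrightarrow> ctr h k \<in> K1"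
  using cube_in_K1 center_in_cube by blast

lemma \<Omega>_K1: "\<Omega> \<subseteq> K1" using Rb(2) by (auto simp: subset_eq)

lemma AE_\<Omega>: "AE x in \<mu>. x \<in> \<Omega>"
  using AE_prob_1[OF \<mu>_\<Omega>] .

lemma meas_cont: "continuous_on UNIV f \<Longrightarrow> f \<in> borel_measurable \<mu>"
  using borel_measurable_continuous_onI measurable_cong_sets[OF \<mu>_sets refl] by blast

lemma integrable_cont:
  fixes f :: "real^'d \<Rightarrow> real"
  assumes "continuous_on UNIV f"
  shows "integrable \<mu> f"
proof -
  have "compact (f ` K1)" by (intro compact_continuous_image continuous_on_subset[OF assms]) auto
  then obtain B where B: "\<forall>y\<in>f ` K1. norm y \<le> B" using compact_imp_bounded bounded_iff by metis
  have "AE x in \<mu>. norm (f x) \<le> B" using AE_\<Omega> by eventually_elim (use B \<Omega>_K1 in auto)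
  then show ?thesis by (intro integrable_const_bound meas_cont assms)
qed

end

lemma int_cube:
  fixes g :: "real^'d \<Rightarrow> real"
  assumes "continuous_on UNIV g"
  shows "integrable lborel (\<lambda>x. indicator (cube h a k) x * g x)"
proof -
  have "integrable lborel (\<lambda>x. indicator (cube h a k) x *\<^sub>R g x)"
    by (rule borel_integrable_compact) (auto simp: cube_def intro: continuous_on_subset[OF assms])
  then show ?thesis by simp
qed

lemma cube_borel[measurable]: "cube h a k \<in> sets borel"
  by (simp add: cube_def)

lemma int_ind_cube: "h > 0 \<Longrightarrow> (\<integral>x. indicator (cube h a (k::int^'d)) x \<partial>lborel) = h ^ CARD('d)"
  using measure_cube by simp

context setting
begin

lemma ucell_nn: "h > 0 \<Longrightarrow> k \<in> cl h \<Longrightarrow> ucell h (a h) (\<rho>h h) k \<ge> 0"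
  unfolding ucell_def using \<rho>_nn by simp

lemma rhohat_integral:
  fixes f :: "real^'d \<Rightarrow> real"
  assumes h: "h > 0" and cf: "continuous_on UNIV f"
  shows "(\<integral>x. f x \<partial>rhohat \<Omega> h (a h) (\<rho>h h))
       = (\<Sum>k\<in>cl h. ucell h (a h) (\<rho>h h) k * (\<integral>x. indicator (cube h (a h) k) x * f x \<partial>lborel))"
proof -
  let ?g = "\<lambda>x. \<Sum>k\<in>cl h. ucell h (a h) (\<rho>h h) k * indicator (cube h (a h) k) x"
  have fm: "f \<in> borel_measurable lborel"
    using borel_measurable_continuous_onI[OF cf] by simp
  have gm: "?g \<in> borel_measurable lborel" by measurable
  have gnn: "AE x in lborel. 0 \<le> ?g x"
    using ucell_nn[OF h] by (intro AE_I2 sum_nonneg) auto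
  have "(\<integral>x. f x \<partial>rhohat \<Omega> h (a h) (\<rho>h h)) = (\<integral>x. ?g x *\<^sub>R f x \<partial>lborel)"
    unfolding rhohat_def by (rule integral_density[OF fm gm gnn])
  also have "\<dots> = (\<integral>x. (\<Sum>k\<in>cl h. ucell h (a h) (\<rho>h h) k * (indicator (cube h (a h) k) x * f x)) \<partial>lborel)"
    by (simp add: sum_distrib_right mult.assoc)
  also have "\<dots> = (\<Sum>k\<in>cl h. (\<integral>x. ucell h (a h) (\<rho>h h) k * (indicator (cube h (a h) k) x * f x) \<partial>lborel))"
    by (rule Bochner_Integration.integral_sum) (use int_cube[OF cf] in auto)
  also have "\<dots> = (\<Sum>k\<in>cl h. ucell h (a h) (\<rho>h h) k * (\<integral>x. indicator (cube h (a h) k) x * f x \<partial>lborel))"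
    by simp
  finally show ?thesis .
qed

lemma cell_err:
  fixes g :: "real^'d \<Rightarrow> real"
  assumes h: "h > 0" and k: "k \<in> cl h" and cg: "continuous_on UNIV g"
    and bd: "\<And>x. x \<in> cube h (a h) k \<Longrightarrow> \<bar>g x - g0\<bar> \<le> e"
  shows "\<bar>\<rho>h h k * g0 - ucell h (a h) (\<rho>h h) k * (\<integral>x. indicator (cube h (a h) k) x * g x \<partial>lborel)\<bar>
         \<le> \<rho>h h k * e"
proof -
  let ?m = "h ^ CARD('d)" and ?I = "indicator (cube h (a h) k) :: real^'d \<Rightarrow> real"
  have m: "?m > 0" using h by simp
  have u: "ucell h (a h) (\<rho>h h) k = \<rho>h h k / ?m" unfolding ucell_def using measure_cube[OF h, of "a h" k] by simp
  have ig: "integrable lborel (\<lambda>x. ?I x * g x)" by (rule int_cube[OF cg])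
  have ic: "integrable lborel (\<lambda>x. ?I x * g0)" by (rule int_cube) simp
  have ice: "integrable lborel (\<lambda>x. ?I x * e)" by (rule int_cube) simp
  have e0: "\<integral>x. ?I x * g0 \<partial>lborel = g0 * ?m" using int_ind_cube[OF h, of "a h" k] by simp
  have e1: "\<integral>x. ?I x * e \<partial>lborel = e * ?m" using int_ind_cube[OF h, of "a h" k] by simp
  have "\<rho>h h k * g0 - ucell h (a h) (\<rho>h h) k * (\<integral>x. ?I x * g x \<partial>lborel)
      = ucell h (a h) (\<rho>h h) k * ((\<integral>x. ?I x * g0 \<partial>lborel) - (\<integral>x. ?I x * g x \<partial>lborel))"
  proof -
    have *: "r * g0 - r / M * I = r / M * (g0 * M - I)" if "M > 0" for I r M :: real
      using that by (simp add: field_simps)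
    show ?thesis unfolding e0 u by (rule *[OF m])
  qed
  also have "\<dots> = ucell h (a h) (\<rho>h h) k * (\<integral>x. ?I x * g0 - ?I x * g x \<partial>lborel)"
    by (simp add: Bochner_Integration.integral_diff[OF ic ig])
  finally have eq: "\<rho>h h k * g0 - ucell h (a h) (\<rho>h h) k * (\<integral>x. ?I x * g x \<partial>lborel)
      = ucell h (a h) (\<rho>h h) k * (\<integral>x. ?I x * g0 - ?I x * g x \<partial>lborel)" .
  have "\<bar>\<integral>x. ?I x * g0 - ?I x * g x \<partial>lborel\<bar> \<le> (\<integral>x. \<bar>?I x * g0 - ?I x * g x\<bar> \<partial>lborel)"
    by (rule integral_abs_bound)
  also have "\<dots> \<le> (\<integral>x. ?I x * e \<partial>lborel)"
  proof (rule integral_mono)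
    show "integrable lborel (\<lambda>x. \<bar>?I x * g0 - ?I x * g x\<bar>)"
      using ic ig by auto
    show "integrable lborel (\<lambda>x. ?I x * e)" by (rule ice)
    fix x show "\<bar>?I x * g0 - ?I x * g x\<bar> \<le> ?I x * e"
      using bd[of x] by (cases "x \<in> cube h (a h) k") (auto simp: abs_minus_commute)
  qed
  also have "\<dots> = e * ?m" by (rule e1)
  finally have ib: "\<bar>\<integral>x. ?I x * g0 - ?I x * g x \<partial>lborel\<bar> \<le> e * ?m" .
  have "\<bar>\<rho>h h k * g0 - ucell h (a h) (\<rho>h h) k * (\<integral>x. ?I x * g x \<partial>lborel)\<bar>
      = ucell h (a h) (\<rho>h h) k * \<bar>\<integral>x. ?I x * g0 - ?I x * g x \<partial>lborel\<bar>"
    unfolding eq using ucell_nn[OF h k] by (simp add: abs_mult)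
  also have "\<dots> \<le> ucell h (a h) (\<rho>h h) k * (e * ?m)"
    by (rule mult_left_mono[OF ib ucell_nn[OF h k]])
  also have "\<dots> = \<rho>h h k * e"
  proof -
    have *: "r / M * (e * M) = r * e" if "M > 0" for r M :: real using that by simp
    show ?thesis unfolding u by (rule *[OF m])
  qed
  finally show ?thesis .
qed

end

context setting
begin

lemma K1_nonempty: "(0::real^'d) \<in> K1" using Rb(1) by simp

lemma lemP:
  fixes f :: "real^'d \<Rightarrow> real"
  assumes cf: "continuous_on UNIV f"
  shows "((\<lambda>h. \<Sum>k\<in>cl h. \<rho>h h k * f (ctr h k)) \<longlongrightarrow> (\<integral>x. f x \<partial>\<mu>)) (at_right 0)"
proof -
  have "compact (f ` K1)" by (intro compact_continuous_image continuous_on_subset[OF cf]) auto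
  then have "bounded (f ` K1)" by (rule compact_imp_bounded)
  then obtain B where B0: "\<forall>y\<in>f ` K1. norm y \<le> B" unfolding bounded_iff by blast
  then have B: "\<And>x. x \<in> K1 \<Longrightarrow> \<bar>f x\<bar> \<le> B" by auto
  have Bnn: "B \<ge> 0" using B[OF K1_nonempty] by linarith
  define f' where "f' x = max (-B) (min B (f x))" for x
  have cf': "continuous_on UNIV f'" unfolding f'_def by (intro continuous_intros cf)
  have bf': "bounded (range f')" unfolding bounded_iff
    by (rule exI[of _ B]) (use Bnn in \<open>auto simp: f'_def abs_le_iff\<close>)
  have eqK: "f' x = f x" if "x \<in> K1" for x using B[OF that] by (auto simp: f'_def)
  have lim1: "((\<lambda>h. \<integral>x. f' x \<partial>rhohat \<Omega> h (a h) (\<rho>h h)) \<longlongrightarrow> (\<integral>x. f' x \<partial>\<mu>)) (at_right 0)"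
    by (rule weak[OF cf' bf'])
  have "(\<integral>x. f' x \<partial>\<mu>) = (\<integral>x. f x \<partial>\<mu>)"
    by (rule integral_cong_AE[OF meas_cont[OF cf'] meas_cont[OF cf]])
       (use AE_\<Omega> in \<open>eventually_elim, use eqK \<Omega>_K1 in auto\<close>)
  note lim1 = lim1[unfolded this]
  have diff: "((\<lambda>h. (\<Sum>k\<in>cl h. \<rho>h h k * f (ctr h k)) - (\<integral>x. f' x \<partial>rhohat \<Omega> h (a h) (\<rho>h h))) \<longlongrightarrow> 0) (at_right 0)"
  proof (rule tendsto_0_by_eps)
    fix e :: real assume e: "e > 0"
    have "uniformly_continuous_on K1 f"
      by (rule compact_uniformly_continuous[OF continuous_on_subset[OF cf]]) auto
    then obtain \<delta> where \<delta>0: "\<delta> > 0" and \<delta>1: "\<forall>x\<in>K1. \<forall>y\<in>K1. dist y x < \<delta> \<longrightarrow> dist (f y) (f x) < e"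
      unfolding uniformly_continuous_on_def using e by blast
    note \<delta> = \<delta>0 \<delta>1[rule_format]
    have cpos: "real CARD('d) > 0" by simp
    show "eventually (\<lambda>h. \<bar>(\<Sum>k\<in>cl h. \<rho>h h k * f (ctr h k)) - (\<integral>x. f' x \<partial>rhohat \<Omega> h (a h) (\<rho>h h))\<bar> \<le> e) (at_right 0)"
      unfolding eventually_at_right_field
    proof (intro exI[of _ "min 1 (\<delta> / real CARD('d))"] conjI allI impI)
      show "0 < min 1 (\<delta> / real CARD('d))" using \<delta>(1) cpos by simp
      fix h :: real assume h: "0 < h" "h < min 1 (\<delta> / real CARD('d))"
      have hd: "real CARD('d) * h < \<delta>" using h cpos by (simp add: field_simps)
      have eq1: "(\<Sum>k\<in>cl h. \<rho>h h k * f (ctr h k)) - (\<integral>x. f' x \<partial>rhohat \<Omega> h (a h) (\<rho>h h))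
          = (\<Sum>k\<in>cl h. \<rho>h h k * f (ctr h k) - ucell h (a h) (\<rho>h h) k * (\<integral>x. indicator (cube h (a h) k) x * f' x \<partial>lborel))"
        by (simp add: rhohat_integral[OF h(1) cf'] sum_subtractf)
      have "\<bar>(\<Sum>k\<in>cl h. \<rho>h h k * f (ctr h k)) - (\<integral>x. f' x \<partial>rhohat \<Omega> h (a h) (\<rho>h h))\<bar>
          \<le> (\<Sum>k\<in>cl h. \<bar>\<rho>h h k * f (ctr h k) - ucell h (a h) (\<rho>h h) k * (\<integral>x. indicator (cube h (a h) k) x * f' x \<partial>lborel)\<bar>)"
        unfolding eq1 by (rule sum_abs)
      also have "\<dots> \<le> (\<Sum>k\<in>cl h. \<rho>h h k * e)"
      proof (rule sum_mono)
        fix k assume k: "k \<in> cl h"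
        show "\<bar>\<rho>h h k * f (ctr h k) - ucell h (a h) (\<rho>h h) k * (\<integral>x. indicator (cube h (a h) k) x * f' x \<partial>lborel)\<bar> \<le> \<rho>h h k * e"
        proof (rule cell_err[OF h(1) k cf'])
          fix x assume x: "x \<in> cube h (a h) k"
          have xK: "x \<in> K1" using cube_in_K1[of h k] h k x by auto
          have cK: "ctr h k \<in> K1" using ctr_in_K1[of h k] h k by auto
          have "dist x (ctr h k) < \<delta>" using cube_center_dist[OF h(1) x] hd by (simp add: dist_norm)
          then have "dist (f x) (f (ctr h k)) < e" using \<delta>(2)[OF cK xK] by simp
          then show "\<bar>f' x - f (ctr h k)\<bar> \<le> e" using eqK[OF xK] by (simp add: dist_real_def)
        qed
      qed
      also have "\<dots> = e" using \<rho>_sum[OF h(1)] by (simp add: sum_distrib_right[symmetric])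
      finally show "\<bar>(\<Sum>k\<in>cl h. \<rho>h h k * f (ctr h k)) - (\<integral>x. f' x \<partial>rhohat \<Omega> h (a h) (\<rho>h h))\<bar> \<le> e" .
    qed
  qed
  have "((\<lambda>h. ((\<Sum>k\<in>cl h. \<rho>h h k * f (ctr h k)) - (\<integral>x. f' x \<partial>rhohat \<Omega> h (a h) (\<rho>h h)))
          + (\<integral>x. f' x \<partial>rhohat \<Omega> h (a h) (\<rho>h h))) \<longlongrightarrow> 0 + (\<integral>x. f x \<partial>\<mu>)) (at_right 0)"
    by (rule tendsto_add[OF diff lim1])
  then show ?thesis by simp
qed

end

lemma ctr_dist:
  assumes "l \<in> nbrs k" "h > 0"
  shows "dist (center h a k) (center h a l) = h"
proof -
  have "(\<Sum>i\<in>UNIV. \<bar>(l - k)$i\<bar>) = 1" using assms(1) by (simp add: nbrs_def)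
  then have "norm (ivec (l - k)) = 1" by (rule ivec_norm)
  have "dist (center h a k) (center h a l) = dist (center h a l) (center h a k)" by (rule dist_commute)
  also have "\<dots> = norm (h *\<^sub>R ivec (l - k))" by (simp add: dist_norm center_diff)
  also have "\<dots> = h" using assms(2) \<open>norm (ivec (l - k)) = 1\<close> by simp
  finally show ?thesis .
qed

lemma nbrs_sym: "l \<in> nbrs k \<longleftrightarrow> k \<in> nbrs l"
proof -
  have "(\<Sum>i\<in>UNIV. \<bar>l$i - k$i\<bar>) = (\<Sum>i\<in>UNIV. \<bar>k$i - l$i\<bar>)" by (simp add: abs_minus_commute)
  then show ?thesis by (simp add: nbrs_def)
qed

context setting
begin

lemma edges_eq: "edges \<Omega> h (a h) = {(k,l). k \<in> cl h \<and> l \<in> cl h \<and> l \<in> nbrs k}"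
  by (simp add: edges_def nbrs_def)

definition bdry :: "real \<Rightarrow> (int^'d) set" where
  "bdry h = {k \<in> cl h. \<not> nbrs k \<subseteq> cl h}"

lemma notcell_ctr: "h > 0 \<Longrightarrow> l \<notin> cl h \<Longrightarrow> ctr h l \<notin> \<Omega>"
  using center_in_box[of h "a h" l] unfolding cells_def interior_cube by blast

lemma compl_nonempty: "- \<Omega> \<noteq> {}"
proof
  assume "- \<Omega> = {}"
  then have "\<Omega> = UNIV" by auto
  then show False using \<Omega>_bdd not_bounded_UNIV by simp
qed

definition Fd :: "real \<Rightarrow> real^'d \<Rightarrow> real" where
  "Fd \<delta> x = max 0 (1 - infdist x (- \<Omega>) / \<delta>)"

lemma Fd_cont: "\<delta> > 0 \<Longrightarrow> continuous_on UNIV (Fd \<delta>)"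
  unfolding Fd_def by (intro continuous_intros) auto

lemma Fd_bounds: "0 \<le> Fd \<delta> x" "\<delta> > 0 \<Longrightarrow> Fd \<delta> x \<le> 1"
  unfolding Fd_def by (auto simp: infdist_nonneg)

lemma Fd_small: "\<exists>\<delta>>0. (\<integral>x. Fd \<delta> x \<partial>\<mu>) \<le> e" if e: "e > 0"
proof -
  let ?s = "\<lambda>n. Fd (1 / (real n + 1))"
  have lim: "(\<lambda>n. \<integral>x. ?s n x \<partial>\<mu>) \<longlonglongrightarrow> (\<integral>x. 0 \<partial>\<mu>)"
  proof (rule integral_dominated_convergence[where w="\<lambda>x. 1"])
    show "(\<lambda>x. 0::real) \<in> borel_measurable \<mu>" by simp
    show "?s n \<in> borel_measurable \<mu>" for n by (rule meas_cont[OF Fd_cont]) simp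
    show "integrable \<mu> (\<lambda>x. 1::real)" by simp
    show "AE x in \<mu>. norm (?s n x) \<le> 1" for n
      using Fd_bounds[of "1 / (real n + 1)"] by (intro AE_I2) auto
    show "AE x in \<mu>. (\<lambda>n. ?s n x) \<longlonglongrightarrow> 0"
      using AE_\<Omega>
    proof eventually_elim
      fix x assume x: "x \<in> \<Omega>"
      have pos: "infdist x (- \<Omega>) > 0"
        by (rule infdist_pos_not_in_closed) (use x \<Omega>_open compl_nonempty in \<open>auto simp: closed_Compl\<close>)
      obtain N :: nat where N: "1 / (real N + 1) < infdist x (- \<Omega>)"
        using reals_Archimedean[OF pos] by (metis add.commute inverse_eq_divide of_nat_Suc)
      have "eventually (\<lambda>n. ?s n x = 0) sequentially"
        unfolding eventually_sequentially
      proof (intro exI[of _ N] allI impI)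
        fix n assume "N \<le> n"
        then have "1 / (real n + 1) \<le> 1 / (real N + 1)" by (simp add: frac_le)
        then have "1 / (real n + 1) < infdist x (- \<Omega>)" using N by linarith
        then have "1 \<le> infdist x (- \<Omega>) / (1 / (real n + 1))" by (simp add: field_simps)
        then show "?s n x = 0" by (simp add: Fd_def)
      qed
      then show "(\<lambda>n. ?s n x) \<longlonglongrightarrow> 0" by (rule tendsto_eventually)
    qed
  qed
  then have "(\<lambda>n. \<integral>x. ?s n x \<partial>\<mu>) \<longlonglongrightarrow> 0" by simp
  then obtain N where "\<bar>\<integral>x. ?s N x \<partial>\<mu>\<bar> < e"
    using e by (auto dest!: LIMSEQ_D[where r=e])
  then show ?thesis by (intro exI[of _ "1 / (real N + 1)"]) auto
qed

lemma bdry_mass: "((\<lambda>h. \<Sum>k\<in>bdry h. \<rho>h h k) \<longlongrightarrow> 0) (at_right 0)"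
proof (rule tendsto_0_by_eps)
  fix e :: real assume e: "e > 0"
  obtain \<delta> where \<delta>: "\<delta> > 0" "(\<integral>x. Fd \<delta> x \<partial>\<mu>) \<le> e/4" using Fd_small[of "e/4"] e by auto
  have ev1: "eventually (\<lambda>h. \<bar>(\<Sum>k\<in>cl h. \<rho>h h k * Fd \<delta> (ctr h k)) - (\<integral>x. Fd \<delta> x \<partial>\<mu>)\<bar> < e/4) (at_right 0)"
    using tendstoD[OF lemP[OF Fd_cont[OF \<delta>(1)]], of "e/4"] e unfolding dist_real_def by auto
  have ev2: "eventually (\<lambda>h. 0 < h \<and> h < \<delta>/2) (at_right 0)"
    unfolding eventually_at_right_field using \<delta>(1) by (intro exI[of _ "\<delta>/2"]) auto
  show "eventually (\<lambda>h. \<bar>\<Sum>k\<in>bdry h. \<rho>h h k\<bar> \<le> e) (at_right 0)"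
    using ev1 ev2
  proof eventually_elim
    case (elim h)
    then have h: "0 < h" "h < \<delta>/2" by auto
    have fin: "finite (cl h)" by (rule finite_cl[OF h(1)])
    have bsub: "bdry h \<subseteq> cl h" by (auto simp: bdry_def)
    have half: "1/2 \<le> Fd \<delta> (ctr h k)" if k: "k \<in> bdry h" for k
    proof -
      obtain l where l: "l \<in> nbrs k" "l \<notin> cl h" using k by (auto simp: bdry_def)
      have "ctr h l \<in> - \<Omega>" using notcell_ctr[OF h(1) l(2)] by simp
      then have "infdist (ctr h k) (- \<Omega>) \<le> dist (ctr h k) (ctr h l)" by (rule infdist_le)
      also have "\<dots> = h" by (rule ctr_dist[OF l(1) h(1)])
      finally have "infdist (ctr h k) (- \<Omega>) / \<delta> \<le> 1/2" using h \<delta>(1) by (simp add: field_simps)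
      then have "1/2 \<le> 1 - infdist (ctr h k) (- \<Omega>) / \<delta>" by linarith
      then show ?thesis unfolding Fd_def by (rule order.trans[OF _ max.cobounded2])
    qed
    have nn: "0 \<le> \<rho>h h k" if "k \<in> cl h" for k using \<rho>_nn[OF h(1) that] .
    have "(\<Sum>k\<in>bdry h. \<rho>h h k) \<le> (\<Sum>k\<in>bdry h. 2 * (\<rho>h h k * Fd \<delta> (ctr h k)))"
    proof (rule sum_mono)
      fix k assume k: "k \<in> bdry h"
      have "0 \<le> \<rho>h h k" using nn k bsub by auto
      then show "\<rho>h h k \<le> 2 * (\<rho>h h k * Fd \<delta> (ctr h k))"
      proof -
        have "1 \<le> 2 * Fd \<delta> (ctr h k)" using half[OF k] by linarith
        then have "\<rho>h h k * 1 \<le> \<rho>h h k * (2 * Fd \<delta> (ctr h k))" by (rule mult_left_mono) fact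
        then show ?thesis by (simp add: algebra_simps)
      qed
    qed
    also have "\<dots> \<le> (\<Sum>k\<in>cl h. 2 * (\<rho>h h k * Fd \<delta> (ctr h k)))"
      by (rule sum_mono2[OF fin bsub]) (use nn Fd_bounds(1) in auto)
    also have "\<dots> = 2 * (\<Sum>k\<in>cl h. \<rho>h h k * Fd \<delta> (ctr h k))" by (simp add: sum_distrib_left)
    finally have "(\<Sum>k\<in>bdry h. \<rho>h h k) \<le> 2 * (\<Sum>k\<in>cl h. \<rho>h h k * Fd \<delta> (ctr h k))" .
    moreover have "(\<Sum>k\<in>cl h. \<rho>h h k * Fd \<delta> (ctr h k)) \<le> e/2" using elim(1) \<delta>(2) by linarith
    moreover have "0 \<le> (\<Sum>k\<in>bdry h. \<rho>h h k)" using nn bsub by (intro sum_nonneg) auto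
    ultimately show "\<bar>\<Sum>k\<in>bdry h. \<rho>h h k\<bar> \<le> e" by simp
  qed
qed

end

lemma posp_sq_diff: "\<bar>(posp x)\<^sup>2 - (posp y)\<^sup>2\<bar> \<le> \<bar>x - y\<bar> * (2 * \<bar>y\<bar> + \<bar>x - y\<bar>)"
proof -
  have l: "\<bar>posp x - posp y\<bar> \<le> \<bar>x - y\<bar>" by (auto simp: posp_def)
  have s: "posp x + posp y \<le> 2 * \<bar>y\<bar> + \<bar>x - y\<bar>" by (auto simp: posp_def)
  have n: "0 \<le> posp x + posp y" by (auto simp: posp_def)
  have "\<bar>(posp x)\<^sup>2 - (posp y)\<^sup>2\<bar> = \<bar>posp x - posp y\<bar> * (posp x + posp y)"
  proof -
    have "(posp x)\<^sup>2 - (posp y)\<^sup>2 = (posp x - posp y) * (posp x + posp y)"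
      by (simp add: power2_eq_square algebra_simps)
    then show ?thesis using n by (simp add: abs_mult)
  qed
  also have "\<dots> \<le> \<bar>x - y\<bar> * (2 * \<bar>y\<bar> + \<bar>x - y\<bar>)"
    by (rule mult_mono[OF l s]) (use n in auto)
  finally show ?thesis .
qed

lemma posp_scale: "h > 0 \<Longrightarrow> posp (h * z) = h * posp z"
  by (auto simp: posp_def max_def mult_le_0_iff zero_le_mult_iff)

lemma negp_posp: "negp x = posp (- x)" by (simp add: posp_def negp_def)

lemma term_rewrite:
  assumes h: "h > 0" and l: "l \<in> nbrs k"
  shows "tau h a k l * (ucell h a \<rho> k * (posp \<xi> / 2)\<^sup>2 + ucell h a \<rho> (l::int^'d) * (negp \<xi> / 2)\<^sup>2)
       = (\<rho> k * (posp (\<xi>/h))\<^sup>2 + \<rho> l * (posp (- (\<xi>/h)))\<^sup>2) / 4"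
proof -
  obtain m where m: "CARD('d) = Suc m" using not0_implies_Suc[of "CARD('d)"] by auto
  have tau: "tau h a k l = h ^ m / h" unfolding tau_def ctr_dist[OF l h] m by simp
  have u: "ucell h a \<rho> j = \<rho> j / (h ^ m * h)" for j
    unfolding ucell_def measure_cube[OF h] m by (simp add: mult.commute)
  have p1: "posp \<xi> = h * posp (\<xi>/h)" using posp_scale[OF h, of "\<xi>/h"] h by simp
  have p2: "negp \<xi> = h * posp (- (\<xi>/h))" unfolding negp_posp using posp_scale[OF h, of "-(\<xi>/h)"] h by simp
  have hm: "h ^ m > 0" using h by simp
  show ?thesis unfolding tau u p1 p2 using h hm
    by (simp add: field_simps power2_eq_square)
qed

context setting
begin

abbreviation "E h \<equiv> edges \<Omega> h (a h)"

lemma edges_Sigma: "E h = Sigma (cl h) (\<lambda>k. nbrs k \<inter> cl h)"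
  by (auto simp: edges_eq)

lemma sum_edges_Sigma: "h > 0 \<Longrightarrow> (\<Sum>(k,l)\<in>E h. f k l) = (\<Sum>k\<in>cl h. \<Sum>l\<in>nbrs k \<inter> cl h. f k l)"
  unfolding edges_Sigma by (rule sum.Sigma[symmetric]) (auto simp: finite_cl finite_nbrs)

lemma sum_edges_swap: "(\<Sum>(k,l)\<in>E h. f k l) = (\<Sum>(k,l)\<in>E h. f l k)"
  by (rule sum.reindex_bij_witness[where i=prod.swap and j=prod.swap]) (auto simp: edges_eq nbrs_sym)

lemma R_rewrite:
  assumes h: "h > 0"
  shows "Rstar \<Omega> h (a h) (\<rho>h h) \<xi>
    = (\<Sum>(k,l)\<in>E h. \<rho>h h k * ((posp (\<xi> k l / h))\<^sup>2 + (posp (- (\<xi> l k / h)))\<^sup>2) / 4)"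
proof -
  have "Rstar \<Omega> h (a h) (\<rho>h h) \<xi>
      = (\<Sum>(k,l)\<in>E h. (\<rho>h h k * (posp (\<xi> k l/h))\<^sup>2 + \<rho>h h l * (posp (- (\<xi> k l/h)))\<^sup>2) / 4)"
    unfolding Rstar_def
    by (rule sum.cong[OF refl]) (auto simp: edges_eq intro!: term_rewrite[OF h])
  also have "\<dots> = (\<Sum>(k,l)\<in>E h. \<rho>h h k * (posp (\<xi> k l/h))\<^sup>2 / 4) + (\<Sum>(k,l)\<in>E h. \<rho>h h l * (posp (- (\<xi> k l/h)))\<^sup>2 / 4)"
    by (simp add: sum.distrib[symmetric] case_prod_unfold add_divide_distrib)
  also have "(\<Sum>(k,l)\<in>E h. \<rho>h h l * (posp (- (\<xi> k l/h)))\<^sup>2 / 4) = (\<Sum>(k,l)\<in>E h. \<rho>h h k * (posp (- (\<xi> l k/h)))\<^sup>2 / 4)"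
    by (rule sum_edges_swap)
  also have "(\<Sum>(k,l)\<in>E h. \<rho>h h k * (posp (\<xi> k l/h))\<^sup>2 / 4) + \<dots>
      = (\<Sum>(k,l)\<in>E h. \<rho>h h k * ((posp (\<xi> k l / h))\<^sup>2 + (posp (- (\<xi> l k / h)))\<^sup>2) / 4)"
    by (simp add: sum.distrib[symmetric] case_prod_unfold add_divide_distrib distrib_left)
  finally show ?thesis .
qed

lemma edge_count:
  assumes h: "h > 0" and c: "c \<ge> 0" and t: "\<And>k l. (k,l) \<in> E h \<Longrightarrow> \<bar>t k l\<bar> \<le> c"
  shows "\<bar>\<Sum>(k,l)\<in>E h. \<rho>h h k * t k l\<bar> \<le> 2 * real CARD('d) * c"
proof -
  have nn: "0 \<le> \<rho>h h k" if "k \<in> cl h" for k using \<rho>_nn[OF h that] .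
  have "\<bar>\<Sum>(k,l)\<in>E h. \<rho>h h k * t k l\<bar> \<le> (\<Sum>(k,l)\<in>E h. \<bar>\<rho>h h k * t k l\<bar>)"
    by (rule order.trans[OF sum_abs]) (simp add: case_prod_unfold)
  also have "\<dots> \<le> (\<Sum>(k,l)\<in>E h. \<rho>h h k * c)"
  proof (rule sum_mono, clarify)
    fix k l assume kl: "(k,l) \<in> E h"
    then have "k \<in> cl h" by (auto simp: edges_eq)
    then show "\<bar>\<rho>h h k * t k l\<bar> \<le> \<rho>h h k * c"
      using nn t[OF kl] by (simp add: abs_mult mult_left_mono)
  qed
  also have "\<dots> = (\<Sum>k\<in>cl h. \<Sum>l\<in>nbrs k \<inter> cl h. \<rho>h h k * c)"
    by (rule sum_edges_Sigma[OF h])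
  also have "\<dots> \<le> (\<Sum>k\<in>cl h. \<rho>h h k * c * (2 * real CARD('d)))"
  proof (rule sum_mono)
    fix k assume k: "k \<in> cl h"
    have "card (nbrs k \<inter> cl h) \<le> card (nbrs k)" by (rule card_mono[OF finite_nbrs]) auto
    then have "real (card (nbrs k \<inter> cl h)) \<le> 2 * real CARD('d)" using card_nbrs[of k] by simp
    moreover have "0 \<le> \<rho>h h k * c" using nn[OF k] c by simp
    ultimately have "real (card (nbrs k \<inter> cl h)) * (\<rho>h h k * c) \<le> 2 * real CARD('d) * (\<rho>h h k * c)"
      by (rule mult_right_mono)
    then show "(\<Sum>l\<in>nbrs k \<inter> cl h. \<rho>h h k * c) \<le> \<rho>h h k * c * (2 * real CARD('d))"
      by (simp add: mult.commute)
  qed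
  also have "\<dots> = (\<Sum>k\<in>cl h. \<rho>h h k) * (c * (2 * real CARD('d)))"
    by (simp add: sum_distrib_right mult.assoc)
  also have "\<dots> = 2 * real CARD('d) * c" using \<rho>_sum[OF h] by simp
  finally show ?thesis .
qed

lemma bdry_part:
  assumes h: "h > 0" "h \<le> 1" and M: "\<And>x. x \<in> K1 \<Longrightarrow> norm (G x) \<le> M"
  defines "D \<equiv> (\<Sum>k\<in>cl h. \<rho>h h k * (norm (G (ctr h k)))\<^sup>2)
                - (\<Sum>(k,l)\<in>E h. \<rho>h h k * (posp (G (ctr h k) \<bullet> ivec (l - k)))\<^sup>2)"
  shows "0 \<le> D" "D \<le> M\<^sup>2 * (\<Sum>k\<in>bdry h. \<rho>h h k)"
proof -
  have nn: "0 \<le> \<rho>h h k" if "k \<in> cl h" for k using \<rho>_nn[OF h(1) that] .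
  define inn where "inn k = (\<Sum>l\<in>nbrs k \<inter> cl h. (posp (G (ctr h k) \<bullet> ivec (l - k)))\<^sup>2)" for k
  define t where "t k = \<rho>h h k * ((norm (G (ctr h k)))\<^sup>2 - inn k)" for k
  have D: "D = (\<Sum>k\<in>cl h. t k)"
    unfolding D_def sum_edges_Sigma[OF h(1)] t_def inn_def
    by (simp add: sum_subtractf sum_distrib_left right_diff_distrib)
  have inn_le: "inn k \<le> (norm (G (ctr h k)))\<^sup>2" for k
  proof -
    have "inn k \<le> (\<Sum>l\<in>nbrs k. (posp (G (ctr h k) \<bullet> ivec (l - k)))\<^sup>2)"
      unfolding inn_def by (rule sum_mono2[OF finite_nbrs]) auto
    also have "\<dots> = (norm (G (ctr h k)))\<^sup>2" by (rule sum_nbrs_pos)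
    finally show ?thesis .
  qed
  have inn_nn: "0 \<le> inn k" for k unfolding inn_def by (rule sum_nonneg) simp
  have t_nn: "0 \<le> t k" if "k \<in> cl h" for k
    unfolding t_def using nn[OF that] inn_le[of k] by simp
  have t_int: "t k = 0" if "k \<in> cl h" "k \<notin> bdry h" for k
  proof -
    have "nbrs k \<subseteq> cl h" using that by (auto simp: bdry_def)
    then have "nbrs k \<inter> cl h = nbrs k" by auto
    then have "inn k = (norm (G (ctr h k)))\<^sup>2" unfolding inn_def using sum_nbrs_pos by simp
    then show ?thesis by (simp add: t_def)
  qed
  have t_b: "t k \<le> \<rho>h h k * M\<^sup>2" if "k \<in> cl h" for k
  proof -
    have "norm (G (ctr h k)) \<le> M" using M ctr_in_K1[OF h that] by blast
    then have "(norm (G (ctr h k)))\<^sup>2 \<le> M\<^sup>2" by (rule power_mono) simp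
    then have "(norm (G (ctr h k)))\<^sup>2 - inn k \<le> M\<^sup>2" using inn_nn[of k] by linarith
    then show ?thesis unfolding t_def by (rule mult_left_mono) (rule nn[OF that])
  qed
  have bsub: "bdry h \<subseteq> cl h" by (auto simp: bdry_def)
  have fin: "finite (cl h)" by (rule finite_cl[OF h(1)])
  have "(\<Sum>k\<in>cl h. t k) = (\<Sum>k\<in>bdry h. t k) + (\<Sum>k\<in>cl h - bdry h. t k)"
    by (simp add: sum.subset_diff[OF bsub fin] add.commute)
  also have "(\<Sum>k\<in>cl h - bdry h. t k) = 0" by (rule sum.neutral) (auto intro: t_int)
  finally have Dt: "D = (\<Sum>k\<in>bdry h. t k)" unfolding D by simp
  show "0 \<le> D" unfolding D by (rule sum_nonneg) (rule t_nn)
  have "(\<Sum>k\<in>bdry h. t k) \<le> (\<Sum>k\<in>bdry h. \<rho>h h k * M\<^sup>2)"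
    by (rule sum_mono) (use t_b bsub in auto)
  also have "\<dots> = M\<^sup>2 * (\<Sum>k\<in>bdry h. \<rho>h h k)" by (simp add: sum_distrib_left mult.commute)
  finally show "D \<le> M\<^sup>2 * (\<Sum>k\<in>bdry h. \<rho>h h k)" unfolding Dt .
qed

end

lemma sqerr:
  assumes "\<bar>x - g\<bar> \<le> \<eta>" "\<bar>g\<bar> \<le> M" "\<eta> \<le> 1"
  shows "\<bar>(posp x)\<^sup>2 - (posp g)\<^sup>2\<bar> \<le> \<eta> * (2 * M + 1)"
proof -
  have "\<bar>x - g\<bar> * (2 * \<bar>g\<bar> + \<bar>x - g\<bar>) \<le> \<eta> * (2 * M + 1)"
    by (rule mult_mono) (use assms in auto)
  then show ?thesis using posp_sq_diff[of x g] by linarith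
qed

lemma combine_err:
  fixes R S A e :: real
  assumes "\<bar>R - S/2\<bar> \<le> e/2" "0 \<le> A - S" "A - S \<le> e"
  shows "\<bar>R - (1/2) * A\<bar> \<le> e"
  using assms unfolding abs_le_iff by linarith

lemma ivec_swap: "ivec (k - l) = - ivec (l - k)"
  by (simp add: ivec_def vec_eq_iff)

context setting
begin

lemma lemA:
  fixes G :: "real^'d \<Rightarrow> real^'d" and \<xi>h :: "real \<Rightarrow> int^'d \<Rightarrow> int^'d \<Rightarrow> real"
  assumes cG: "continuous_on UNIV G"
    and apx: "\<And>\<epsilon>. \<epsilon> > 0 \<Longrightarrow> eventually (\<lambda>h. \<forall>(k,l)\<in>E h.
               \<bar>\<xi>h h k l - G (ctr h k) \<bullet> (ctr h l - ctr h k)\<bar> \<le> \<epsilon> * h) (at_right 0)"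
  shows "((\<lambda>h. Rstar \<Omega> h (a h) (\<rho>h h) (\<xi>h h)) \<longlongrightarrow> (1/2) * (LINT x:\<Omega>|\<mu>. (norm (G x))\<^sup>2)) (at_right 0)"
proof -
  have cN: "continuous_on UNIV (\<lambda>x. (norm (G x))\<^sup>2)" by (intro continuous_intros cG)
  let ?A = "\<lambda>h. \<Sum>k\<in>cl h. \<rho>h h k * (norm (G (ctr h k)))\<^sup>2"
  have limA: "(?A \<longlongrightarrow> (\<integral>x. (norm (G x))\<^sup>2 \<partial>\<mu>)) (at_right 0)" by (rule lemP[OF cN])
  have \<Omega>s: "\<Omega> \<in> sets \<mu>" using \<mu>_sets \<Omega>_open by simp
  have LI: "(LINT x:\<Omega>|\<mu>. (norm (G x))\<^sup>2) = (\<integral>x. (norm (G x))\<^sup>2 \<partial>\<mu>)"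
    unfolding set_lebesgue_integral_def
  proof (rule integral_cong_AE)
    show "(\<lambda>x. indicator \<Omega> x *\<^sub>R (norm (G x))\<^sup>2) \<in> borel_measurable \<mu>"
      by (intro borel_measurable_scaleR borel_measurable_indicator \<Omega>s meas_cont[OF cN])
    show "(\<lambda>x. (norm (G x))\<^sup>2) \<in> borel_measurable \<mu>" by (rule meas_cont[OF cN])
    show "AE x in \<mu>. indicator \<Omega> x *\<^sub>R (norm (G x))\<^sup>2 = (norm (G x))\<^sup>2"
      using AE_\<Omega> by eventually_elim simp
  qed
  have "compact (G ` K1)" by (intro compact_continuous_image continuous_on_subset[OF cG]) auto
  then have "bounded (G ` K1)" by (rule compact_imp_bounded)
  then obtain M0 where M0: "\<forall>y\<in>G ` K1. norm y \<le> M0" unfolding bounded_iff by blast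
  define M where "M = max M0 0"
  have M: "norm (G x) \<le> M" if "x \<in> K1" for x
    unfolding M_def using M0 that by (intro order.trans[OF _ max.cobounded1]) auto
  have Mnn: "M \<ge> 0" by (simp add: M_def)
  have main: "((\<lambda>h. Rstar \<Omega> h (a h) (\<rho>h h) (\<xi>h h) - (1/2) * ?A h) \<longlongrightarrow> 0) (at_right 0)"
  proof (rule tendsto_0_by_eps)
    fix \<epsilon> :: real assume \<epsilon>: "\<epsilon> > 0"
    have cpos: "real CARD('d) > 0" by simp
    define \<eta> where "\<eta> = min 1 (\<epsilon> / (2 * real CARD('d) * (2*M+1)))"
    have \<eta>pos: "\<eta> > 0" using \<epsilon> cpos Mnn by (simp add: \<eta>_def)
    have \<eta>1: "\<eta> \<le> 1" by (simp add: \<eta>_def)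
    have \<eta>e: "2 * real CARD('d) * (\<eta> * (2*M+1) / 2) \<le> \<epsilon>/2"
    proof -
      have "\<eta> \<le> \<epsilon> / (2 * real CARD('d) * (2*M+1))" by (simp add: \<eta>_def)
      moreover have Q: "2 * real CARD('d) * (2*M+1) > 0" using cpos Mnn by simp
      ultimately have "\<eta> * (2 * real CARD('d) * (2*M+1)) \<le> \<epsilon>" by (simp only: pos_le_divide_eq[OF Q])
      then show ?thesis by (simp add: algebra_simps)
    qed
    have "uniformly_continuous_on K1 G"
      by (rule compact_uniformly_continuous[OF continuous_on_subset[OF cG]]) auto
    then obtain \<delta> where \<delta>0: "\<delta> > 0" and \<delta>1: "\<forall>x\<in>K1. \<forall>y\<in>K1. dist y x < \<delta> \<longrightarrow> dist (G y) (G x) < \<eta>/2"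
      unfolding uniformly_continuous_on_def using \<eta>pos by (meson half_gt_zero)
    have ev1: "eventually (\<lambda>h. \<forall>(k,l)\<in>E h. \<bar>\<xi>h h k l - G (ctr h k) \<bullet> (ctr h l - ctr h k)\<bar> \<le> \<eta>/2 * h) (at_right 0)"
      by (rule apx) (use \<eta>pos in simp)
    have ev2: "eventually (\<lambda>h. dist (\<Sum>k\<in>bdry h. \<rho>h h k) 0 < \<epsilon> / (2 * (M\<^sup>2 + 1))) (at_right 0)"
    proof (rule tendstoD[OF bdry_mass])
      have "0 < 2 * (M\<^sup>2 + 1)" by (simp add: add_nonneg_pos)
      then show "0 < \<epsilon> / (2 * (M\<^sup>2 + 1))" using \<epsilon> by (rule divide_pos_pos[rotated])
    qed
    have ev3: "eventually (\<lambda>h. 0 < h \<and> h < min 1 \<delta>) (at_right 0)"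
      unfolding eventually_at_right_field using \<delta>0 by (intro exI[of _ "min 1 \<delta>"]) auto
    show "eventually (\<lambda>h. \<bar>Rstar \<Omega> h (a h) (\<rho>h h) (\<xi>h h) - (1/2) * ?A h\<bar> \<le> \<epsilon>) (at_right 0)"
      using ev1 ev2 ev3
    proof eventually_elim
      case (elim h)
      have h: "0 < h" "h \<le> 1" "h < \<delta>" using elim(3) by auto
      note apxh = elim(1)
      have bm: "(\<Sum>k\<in>bdry h. \<rho>h h k) \<le> \<epsilon> / (2 * (M\<^sup>2 + 1))" using elim(2) by (simp add: dist_real_def)
      define g where "g k l = G (ctr h k) \<bullet> ivec (l - k)" for k l
      define t where "t k l = ((posp (\<xi>h h k l / h))\<^sup>2 + (posp (- (\<xi>h h l k / h)))\<^sup>2) / 4 - (posp (g k l))\<^sup>2 / 2" for k l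
      have zeta: "\<bar>\<xi>h h k l / h - g k l\<bar> \<le> \<eta>/2" if kl: "(k,l) \<in> E h" for k l
      proof -
        have "\<bar>\<xi>h h k l - G (ctr h k) \<bullet> (ctr h l - ctr h k)\<bar> \<le> \<eta>/2 * h" using apxh kl by auto
        moreover have "G (ctr h k) \<bullet> (ctr h l - ctr h k) = h * g k l"
          by (simp add: g_def center_diff)
        ultimately have "\<bar>\<xi>h h k l - h * g k l\<bar> \<le> \<eta>/2 * h" by simp
        moreover have "\<xi>h h k l / h - g k l = (\<xi>h h k l - h * g k l) / h" using h(1) by (simp add: field_simps)
        ultimately show ?thesis using h(1) by (simp add: abs_divide divide_le_eq)
      qed
      have tb: "\<bar>t k l\<bar> \<le> \<eta> * (2*M+1) / 2" if kl: "(k,l) \<in> E h" for k l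
      proof -
        have lk: "(l,k) \<in> E h" using kl nbrs_sym[of l k] by (auto simp: edges_eq)
        have k: "k \<in> cl h" and l: "l \<in> cl h" and ln: "l \<in> nbrs k" using kl by (auto simp: edges_eq)
        have ck: "ctr h k \<in> K1" and cl: "ctr h l \<in> K1" using ctr_in_K1 h k l by auto
        have nv: "norm (ivec (l - k)) = 1"
          using ln by (intro ivec_norm) (simp add: nbrs_def)
        have gM: "\<bar>g k l\<bar> \<le> M"
        proof -
          have "\<bar>g k l\<bar> \<le> norm (G (ctr h k)) * norm (ivec (l - k))"
            unfolding g_def by (rule Cauchy_Schwarz_ineq2)
          also have "\<dots> \<le> M" using M[OF ck] nv by simp
          finally show ?thesis .
        qed
        have dGl: "dist (G (ctr h l)) (G (ctr h k)) < \<eta>/2"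
        proof -
          have "dist (ctr h l) (ctr h k) = dist (ctr h k) (ctr h l)" by (rule dist_commute)
          also have "\<dots> = h" by (rule ctr_dist[OF ln h(1)])
          finally have "dist (ctr h l) (ctr h k) < \<delta>" using h(3) by simp
          then show ?thesis using \<delta>1 ck cl by blast
        qed
        have gsw: "\<bar>g l k + g k l\<bar> < \<eta>/2"
        proof -
          have "g l k + g k l = (G (ctr h k) - G (ctr h l)) \<bullet> ivec (l - k)"
            unfolding g_def ivec_swap[of l k] by (simp add: inner_diff_left)
          have "\<bar>g l k + g k l\<bar> \<le> norm (G (ctr h k) - G (ctr h l)) * norm (ivec (l - k))"
            unfolding \<open>g l k + g k l = _\<close> by (rule Cauchy_Schwarz_ineq2)
          then show ?thesis using dGl nv by (simp add: dist_norm norm_minus_commute)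
        qed
        have z1: "\<bar>\<xi>h h k l / h - g k l\<bar> \<le> \<eta>" using zeta[OF kl] \<eta>pos by simp
        have z2: "\<bar>- (\<xi>h h l k / h) - g k l\<bar> \<le> \<eta>"
          using zeta[OF lk] gsw unfolding abs_le_iff abs_less_iff by linarith
        have a1: "\<bar>(posp (\<xi>h h k l / h))\<^sup>2 - (posp (g k l))\<^sup>2\<bar> \<le> \<eta> * (2*M+1)"
          by (rule sqerr[OF z1 gM \<eta>1])
        have a2: "\<bar>(posp (- (\<xi>h h l k / h)))\<^sup>2 - (posp (g k l))\<^sup>2\<bar> \<le> \<eta> * (2*M+1)"
          by (rule sqerr[OF z2 gM \<eta>1])
        have "t k l = (((posp (\<xi>h h k l / h))\<^sup>2 - (posp (g k l))\<^sup>2) + ((posp (- (\<xi>h h l k / h)))\<^sup>2 - (posp (g k l))\<^sup>2)) / 4"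
          by (simp add: t_def field_simps)
        then show ?thesis using a1 a2 by (simp add: abs_le_iff) linarith
      qed
      let ?S = "\<Sum>(k,l)\<in>E h. \<rho>h h k * (posp (g k l))\<^sup>2"
      have R: "Rstar \<Omega> h (a h) (\<rho>h h) (\<xi>h h)
          = (\<Sum>(k,l)\<in>E h. \<rho>h h k * ((posp (\<xi>h h k l / h))\<^sup>2 + (posp (- (\<xi>h h l k / h)))\<^sup>2) / 4)"
        by (rule R_rewrite[OF h(1)])
      have RS: "Rstar \<Omega> h (a h) (\<rho>h h) (\<xi>h h) - ?S / 2 = (\<Sum>(k,l)\<in>E h. \<rho>h h k * t k l)"
      proof -
        have "(\<Sum>(k,l)\<in>E h. \<rho>h h k * t k l)
          = (\<Sum>(k,l)\<in>E h. \<rho>h h k * ((posp (\<xi>h h k l / h))\<^sup>2 + (posp (- (\<xi>h h l k / h)))\<^sup>2) / 4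
                 - \<rho>h h k * (posp (g k l))\<^sup>2 / 2)"
          by (rule sum.cong[OF refl]) (simp add: t_def case_prod_unfold algebra_simps)
        also have "\<dots> = (\<Sum>(k,l)\<in>E h. \<rho>h h k * ((posp (\<xi>h h k l / h))\<^sup>2 + (posp (- (\<xi>h h l k / h)))\<^sup>2) / 4)
                 - (\<Sum>(k,l)\<in>E h. \<rho>h h k * (posp (g k l))\<^sup>2 / 2)"
          by (simp add: case_prod_unfold sum_subtractf)
        also have "(\<Sum>(k,l)\<in>E h. \<rho>h h k * (posp (g k l))\<^sup>2 / 2) = ?S / 2"
          by (simp add: case_prod_unfold sum_divide_distrib)
        finally show ?thesis unfolding R by simp
      qed
      have e1: "\<bar>Rstar \<Omega> h (a h) (\<rho>h h) (\<xi>h h) - ?S / 2\<bar> \<le> \<epsilon>/2"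
      proof -
        have "\<bar>\<Sum>(k,l)\<in>E h. \<rho>h h k * t k l\<bar> \<le> 2 * real CARD('d) * (\<eta> * (2*M+1) / 2)"
          by (rule edge_count[OF h(1)]) (use tb \<eta>pos Mnn in auto)
        then show ?thesis unfolding RS using \<eta>e by linarith
      qed
      have D: "0 \<le> ?A h - ?S" "?A h - ?S \<le> M\<^sup>2 * (\<Sum>k\<in>bdry h. \<rho>h h k)"
        using bdry_part[OF h(1) h(2) M, unfolded g_def[symmetric]] unfolding g_def by auto
      have "M\<^sup>2 * (\<Sum>k\<in>bdry h. \<rho>h h k) \<le> M\<^sup>2 * (\<epsilon> / (2 * (M\<^sup>2 + 1)))"
        by (rule mult_left_mono[OF bm]) simp
      also have "\<dots> \<le> \<epsilon>"
      proof -
        have X: "0 < 2 * (M\<^sup>2 + 1)" by (simp add: add_nonneg_pos)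
        have q: "M\<^sup>2 / (2 * (M\<^sup>2 + 1)) \<le> 1" by (simp only: pos_divide_le_eq[OF X]) simp
        have "M\<^sup>2 * (\<epsilon> / (2 * (M\<^sup>2 + 1))) = \<epsilon> * (M\<^sup>2 / (2 * (M\<^sup>2 + 1)))" by simp
        also have "\<dots> \<le> \<epsilon> * 1" by (rule mult_left_mono[OF q]) (use \<epsilon> in simp)
        finally show ?thesis by simp
      qed
      finally have e2: "?A h - ?S \<le> \<epsilon>" using D(2) by linarith
      show "\<bar>Rstar \<Omega> h (a h) (\<rho>h h) (\<xi>h h) - (1/2) * ?A h\<bar> \<le> \<epsilon>"
        by (rule combine_err[OF e1 D(1) e2])
    qed
  qed
  have "((\<lambda>h. (Rstar \<Omega> h (a h) (\<rho>h h) (\<xi>h h) - (1/2) * ?A h) + (1/2) * ?A h)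
         \<longlongrightarrow> 0 + (1/2) * (\<integral>x. (norm (G x))\<^sup>2 \<partial>\<mu>)) (at_right 0)"
    by (intro tendsto_add main tendsto_mult_left limA)
  then show ?thesis unfolding LI by simp
qed

end

lemma grad_inner:
  fixes f :: "real^'d \<Rightarrow> real"
  assumes "bounded_linear D"
  shows "D v = (\<chi> i. D (axis i 1)) \<bullet> v"
proof -
  interpret D: bounded_linear D by fact
  have "v = (\<Sum>i\<in>UNIV. v$i *\<^sub>R axis i 1)"
    using basis_expansion[of v] by (simp add: scalar_mult_eq_scaleR)
  then have "D v = D (\<Sum>i\<in>UNIV. v$i *\<^sub>R axis i 1)" by simp
  also have "\<dots> = (\<Sum>i\<in>UNIV. v$i * D (axis i 1))" by (simp add: D.sum D.scale)
  also have "\<dots> = (\<chi> i. D (axis i 1)) \<bullet> v" by (simp add: inner_vec_def mult.commute)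
  finally show ?thesis .
qed

lemma grad_deriv:
  fixes f :: "real^'d \<Rightarrow> real"
  assumes "f differentiable (at x)"
  shows "(f has_derivative (\<lambda>v. grad f x \<bullet> v)) (at x)"
proof -
  have d: "(f has_derivative frechet_derivative f (at x)) (at x)"
    using assms frechet_derivative_works by blast
  have "frechet_derivative f (at x) = (\<lambda>v. grad f x \<bullet> v)"
    unfolding grad_def by (rule ext, rule grad_inner[OF has_derivative_bounded_linear[OF d]])
  then show ?thesis using d by simp
qed

lemma grad_eq:
  fixes f :: "real^'d \<Rightarrow> real"
  assumes "(f has_derivative (\<lambda>v. w \<bullet> v)) (at x)"
  shows "grad f x = w"
proof -
  have "frechet_derivative f (at x) = (\<lambda>v. w \<bullet> v)" using frechet_derivative_at[OF assms] by simp
  then show ?thesis unfolding grad_def by (simp add: vec_eq_iff inner_axis)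
qed

lemma mvt_unif:
  fixes f :: "real^'d \<Rightarrow> real"
  assumes C1: "C1fun f" and S: "compact S" "convex S" and e: "e > 0"
  shows "\<exists>\<delta>>0. \<forall>x\<in>S. \<forall>y\<in>S. dist x y < \<delta> \<longrightarrow> \<bar>f y - f x - grad f x \<bullet> (y - x)\<bar> \<le> e * norm (y - x)"
proof -
  have diff: "\<And>z. f differentiable (at z)" and cg: "continuous_on UNIV (grad f)"
    using C1 by (auto simp: C1fun_def)
  have "uniformly_continuous_on S (grad f)"
    by (rule compact_uniformly_continuous[OF continuous_on_subset[OF cg] S(1)]) auto
  then obtain \<delta> where \<delta>0: "\<delta> > 0" and \<delta>1: "\<forall>x\<in>S. \<forall>y\<in>S. dist y x < \<delta> \<longrightarrow> dist (grad f y) (grad f x) < e"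
    unfolding uniformly_continuous_on_def using e by blast
  show ?thesis
  proof (intro exI[of _ \<delta>] conjI ballI impI)
    show "\<delta> > 0" by fact
    fix x y assume x: "x \<in> S" and y: "y \<in> S" and dxy: "dist x y < \<delta>"
    let ?T = "closed_segment x y"
    have TS: "?T \<subseteq> S" using S(2) x y by (simp add: closed_segment_subset)
    define F where "F z = f z - grad f x \<bullet> z" for z
    have dF: "(F has_derivative (\<lambda>v. (grad f z - grad f x) \<bullet> v)) (at z within ?T)" for z
    proof -
      have "((\<lambda>z. f z - grad f x \<bullet> z) has_derivative (\<lambda>v. grad f z \<bullet> v - grad f x \<bullet> v)) (at z)"
        by (intro derivative_intros grad_deriv diff)
      then show ?thesis unfolding F_def by (auto simp: inner_diff_left intro: has_derivative_at_withinI)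
    qed
    have onb: "onorm (\<lambda>v. (grad f z - grad f x) \<bullet> v) \<le> e" if z: "z \<in> ?T" for z
    proof (rule onorm_le)
      fix v
      have "dist z x \<le> dist x y" using dist_in_closed_segment[OF z] by simp
      then have "dist z x < \<delta>" using dxy by simp
      then have "norm (grad f z - grad f x) < e" using \<delta>1 TS z x by (auto simp: dist_norm)
      then show "norm ((grad f z - grad f x) \<bullet> v) \<le> e * norm v"
        using Cauchy_Schwarz_ineq2[of "grad f z - grad f x" v] norm_ge_zero[of v]
        by (simp add: mult_right_mono order.trans[OF _ mult_right_mono])
    qed
    have "norm (F y - F x) \<le> e * norm (y - x)"
      by (rule differentiable_bound[OF convex_closed_segment dF onb]) auto
    then show "\<bar>f y - f x - grad f x \<bullet> (y - x)\<bar> \<le> e * norm (y - x)"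
      by (simp add: F_def inner_diff_right algebra_simps)
  qed
qed


context setting
begin

lemma int_close:
  fixes p q :: "real^'d \<Rightarrow> real"
  assumes cp: "continuous_on UNIV p" and cq: "continuous_on UNIV q"
    and b: "\<And>y. y \<in> \<Omega> \<Longrightarrow> \<bar>p y - q y\<bar> \<le> c"
  shows "\<bar>(\<integral>y. p y \<partial>\<mu>) - (\<integral>y. q y \<partial>\<mu>)\<bar> \<le> c"
proof -
  have ip: "integrable \<mu> p" and iq: "integrable \<mu> q" using integrable_cont cp cq by auto
  have "(\<integral>y. p y \<partial>\<mu>) - (\<integral>y. q y \<partial>\<mu>) = (\<integral>y. p y - q y \<partial>\<mu>)"
    by (rule Bochner_Integration.integral_diff[OF ip iq, symmetric])
  moreover have "\<bar>\<integral>y. p y - q y \<partial>\<mu>\<bar> \<le> (\<integral>y. \<bar>p y - q y\<bar> \<partial>\<mu>)" by (rule integral_abs_bound)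
  moreover have "(\<integral>y. \<bar>p y - q y\<bar> \<partial>\<mu>) \<le> (\<integral>y. c \<partial>\<mu>)"
  proof (rule integral_mono_AE)
    show "integrable \<mu> (\<lambda>y. \<bar>p y - q y\<bar>)" using ip iq by auto
    show "integrable \<mu> (\<lambda>y. c)" by simp
    show "AE y in \<mu>. \<bar>p y - q y\<bar> \<le> c" using AE_\<Omega> by eventually_elim (rule b)
  qed
  moreover have "(\<integral>y. c \<partial>\<mu>) = c" by (simp add: prob_space)
  ultimately show ?thesis by linarith
qed

abbreviation "K2 \<equiv> cball (0::real^'d) (2 * (Rb + real CARD('d)))"

lemma K2_diff: "x \<in> K1 \<Longrightarrow> y \<in> K1 \<Longrightarrow> x - y \<in> K2"
  using norm_triangle_ineq4[of x y] by simp

lemma cont_shift: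
  fixes g :: "real^'d \<Rightarrow> real" and x :: "real^'d"
  shows "continuous_on UNIV g \<Longrightarrow> continuous_on UNIV (\<lambda>y. g (x - y))"
proof -
  assume cg: "continuous_on UNIV g"
  have "continuous_on UNIV (\<lambda>y. x - y)" by (intro continuous_on_diff continuous_on_const continuous_on_id)
  then show ?thesis by (rule continuous_on_compose2[OF cg _ subset_UNIV])
qed

lemma lemU:
  fixes g :: "real^'d \<Rightarrow> real"
  assumes cg: "continuous_on UNIV g" and e: "e > 0"
  shows "eventually (\<lambda>h. \<forall>x\<in>K1. \<bar>(\<Sum>k\<in>cl h. \<rho>h h k * g (x - ctr h k)) - (\<integral>y. g (x - y) \<partial>\<mu>)\<bar> \<le> e) (at_right 0)"
proof -
  have uc: "uniformly_continuous_on K2 g"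
    by (rule compact_uniformly_continuous[OF continuous_on_subset[OF cg]]) auto
  have e3: "e/3 > 0" using e by simp
  have "\<exists>\<delta>>0. \<forall>x\<in>K2. \<forall>y\<in>K2. dist y x < \<delta> \<longrightarrow> dist (g y) (g x) < e/3"
    using uc[unfolded uniformly_continuous_on_def, rule_format, OF e3] .
  then obtain \<delta> where \<delta>': "\<delta> > 0 \<and> (\<forall>x\<in>K2. \<forall>y\<in>K2. dist y x < \<delta> \<longrightarrow> dist (g y) (g x) < e/3)"
    by (rule exE)
  note \<delta>0 = conjunct1[OF \<delta>'] and \<delta>1 = conjunct2[OF \<delta>']
  have TB: "\<forall>\<epsilon>>0. \<exists>k. finite k \<and> k \<subseteq> K1 \<and> K1 \<subseteq> (\<Union>x\<in>k. ball x \<epsilon>)"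
    by (rule seq_compact_imp_totally_bounded[OF compact_imp_seq_compact[OF compact_cball]])
  have "\<exists>k. finite k \<and> k \<subseteq> K1 \<and> K1 \<subseteq> (\<Union>x\<in>k. ball x \<delta>)" using TB[rule_format, OF \<delta>0] .
  then obtain Z where Z': "finite Z \<and> Z \<subseteq> K1 \<and> K1 \<subseteq> (\<Union>z\<in>Z. ball z \<delta>)" by (rule exE)
  note Z = conjunct1[OF Z'] conjunct1[OF conjunct2[OF Z']] conjunct2[OF conjunct2[OF Z']]
  have evZ: "eventually (\<lambda>h. \<forall>z\<in>Z. dist (\<Sum>k\<in>cl h. \<rho>h h k * g (z - ctr h k)) (\<integral>y. g (z - y) \<partial>\<mu>) < e/3) (at_right 0)"
  proof (rule eventually_ball_finite[OF Z(1)], rule ballI)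
    fix z assume "z \<in> Z"
    have "e/3 > 0" using e by simp
    then show "eventually (\<lambda>h. dist (\<Sum>k\<in>cl h. \<rho>h h k * g (z - ctr h k)) (\<integral>y. g (z - y) \<partial>\<mu>) < e/3) (at_right 0)"
      by (rule tendstoD[OF lemP[OF cont_shift[OF cg]]])
  qed
  have evh: "eventually (\<lambda>h::real. 0 < h \<and> h \<le> 1) (at_right 0)"
    unfolding eventually_at_right_field by (intro exI[of _ "1::real"]) auto
  show ?thesis using evZ evh
  proof eventually_elim
    case (elim h)
    have h: "0 < h" "h \<le> 1" using elim(2) by auto
    show ?case
    proof
      fix x assume x: "x \<in> K1"
      have "x \<in> (\<Union>z\<in>Z. ball z \<delta>)" using Z(3) x by (rule subsetD)
      then obtain z where z1: "z \<in> Z" and "x \<in> ball z \<delta>" by (rule UN_E)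
      then have z: "z \<in> Z" "dist z x < \<delta>" by auto
      have zK: "z \<in> K1" using Z(2) z(1) by auto
      have c: "\<bar>(\<Sum>k\<in>cl h. \<rho>h h k * g (z - ctr h k)) - (\<integral>y. g (z - y) \<partial>\<mu>)\<bar> < e/3"
        using elim(1) z(1) by (auto simp: dist_real_def)
      have a: "\<bar>(\<Sum>k\<in>cl h. \<rho>h h k * g (x - ctr h k)) - (\<Sum>k\<in>cl h. \<rho>h h k * g (z - ctr h k))\<bar> \<le> e/3"
      proof -
        have "\<bar>(\<Sum>k\<in>cl h. \<rho>h h k * g (x - ctr h k)) - (\<Sum>k\<in>cl h. \<rho>h h k * g (z - ctr h k))\<bar>
            = \<bar>\<Sum>k\<in>cl h. \<rho>h h k * (g (x - ctr h k) - g (z - ctr h k))\<bar>"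
          by (simp add: sum_subtractf right_diff_distrib)
        also have "\<dots> \<le> (\<Sum>k\<in>cl h. \<bar>\<rho>h h k * (g (x - ctr h k) - g (z - ctr h k))\<bar>)" by (rule sum_abs)
        also have "\<dots> \<le> (\<Sum>k\<in>cl h. \<rho>h h k * (e/3))"
        proof (rule sum_mono)
          fix k assume k: "k \<in> cl h"
          have ck: "ctr h k \<in> K1" using ctr_in_K1 h k by auto
          have "dist (x - ctr h k) (z - ctr h k) < \<delta>" using z(2) by (simp add: dist_norm norm_minus_commute)
          then have "dist (g (x - ctr h k)) (g (z - ctr h k)) < e/3"
            by (rule \<delta>1[rule_format, OF K2_diff[OF zK ck] K2_diff[OF x ck]])
          then have "\<bar>g (x - ctr h k) - g (z - ctr h k)\<bar> \<le> e/3" by (simp add: dist_real_def)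
          then have "\<rho>h h k * \<bar>g (x - ctr h k) - g (z - ctr h k)\<bar> \<le> \<rho>h h k * (e/3)"
            by (rule mult_left_mono) (rule \<rho>_nn[OF h(1) k])
          then show "\<bar>\<rho>h h k * (g (x - ctr h k) - g (z - ctr h k))\<bar> \<le> \<rho>h h k * (e/3)"
            using \<rho>_nn[OF h(1) k] by (simp add: abs_mult)
        qed
        also have "\<dots> = (\<Sum>k\<in>cl h. \<rho>h h k) * (e/3)" by (rule sum_distrib_right[symmetric])
        also have "\<dots> = e/3" using \<rho>_sum[OF h(1)] by simp
        finally show ?thesis .
      qed
      have b: "\<bar>(\<integral>y. g (x - y) \<partial>\<mu>) - (\<integral>y. g (z - y) \<partial>\<mu>)\<bar> \<le> e/3"
      proof (rule int_close[OF cont_shift[OF cg] cont_shift[OF cg]])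
        fix y assume "y \<in> \<Omega>"
        then have yK: "y \<in> K1" using \<Omega>_K1 by auto
        have "dist (x - y) (z - y) < \<delta>" using z(2) by (simp add: dist_norm norm_minus_commute)
        then have "dist (g (x - y)) (g (z - y)) < e/3"
          by (rule \<delta>1[rule_format, OF K2_diff[OF zK yK] K2_diff[OF x yK]])
        then show "\<bar>g (x - y) - g (z - y)\<bar> \<le> e/3" by (simp add: dist_real_def)
      qed
      show "\<bar>(\<Sum>k\<in>cl h. \<rho>h h k * g (x - ctr h k)) - (\<integral>y. g (x - y) \<partial>\<mu>)\<bar> \<le> e"
        using a b c unfolding abs_le_iff abs_less_iff by linarith
    qed
  qed
qed

lemma int_cont:
  fixes g :: "real^'d \<Rightarrow> real"
  assumes cg: "continuous_on UNIV g"
  shows "continuous_on UNIV (\<lambda>x. \<integral>y. g (x - y) \<partial>\<mu>)"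
proof (rule continuous_at_imp_continuous_on, intro ballI)
  fix x0 :: "real^'d"
  let ?K = "cball (0::real^'d) (norm x0 + 1 + (Rb + real CARD('d)))"
  show "isCont (\<lambda>x. \<integral>y. g (x - y) \<partial>\<mu>) x0"
    unfolding continuous_at_eps_delta
  proof (intro allI impI)
    fix e :: real assume e: "e > 0"
    have uc: "uniformly_continuous_on ?K g"
      by (rule compact_uniformly_continuous[OF continuous_on_subset[OF cg]]) auto
    have e2: "e/2 > 0" using e by simp
    have "\<exists>\<delta>>0. \<forall>x\<in>?K. \<forall>y\<in>?K. dist y x < \<delta> \<longrightarrow> dist (g y) (g x) < e/2"
      using uc[unfolded uniformly_continuous_on_def, rule_format, OF e2] .
    then obtain \<delta> where \<delta>': "\<delta> > 0 \<and> (\<forall>x\<in>?K. \<forall>y\<in>?K. dist y x < \<delta> \<longrightarrow> dist (g y) (g x) < e/2)"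
      by (rule exE)
    note \<delta>0 = conjunct1[OF \<delta>'] and \<delta>1 = conjunct2[OF \<delta>']
    show "\<exists>d>0. \<forall>x. dist x x0 < d \<longrightarrow> dist (\<integral>y. g (x - y) \<partial>\<mu>) (\<integral>y. g (x0 - y) \<partial>\<mu>) < e"
    proof (intro exI[of _ "min 1 \<delta>"] conjI allI impI)
      show "0 < min 1 \<delta>" using \<delta>0 by simp
      fix x assume dx: "dist x x0 < min 1 \<delta>"
      have "\<bar>(\<integral>y. g (x - y) \<partial>\<mu>) - (\<integral>y. g (x0 - y) \<partial>\<mu>)\<bar> \<le> e/2"
      proof (rule int_close[OF cont_shift[OF cg] cont_shift[OF cg]])
        fix y assume "y \<in> \<Omega>"
        then have ny: "norm y \<le> Rb + real CARD('d)" using \<Omega>_K1 by auto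
        have nx: "norm x \<le> norm x0 + 1"
          using dx norm_triangle_sub[of x x0] by (simp add: dist_norm)
        have k1: "x - y \<in> ?K" using ny nx norm_triangle_ineq4[of x y] by simp
        have k2: "x0 - y \<in> ?K" using ny norm_triangle_ineq4[of x0 y] by simp
        have "dist (x - y) (x0 - y) < \<delta>" using dx by (simp add: dist_norm)
        then have "dist (g (x - y)) (g (x0 - y)) < e/2" by (rule \<delta>1[rule_format, OF k2 k1])
        then show "\<bar>g (x - y) - g (x0 - y)\<bar> \<le> e/2" by (simp add: dist_real_def)
      qed
      then show "dist (\<integral>y. g (x - y) \<partial>\<mu>) (\<integral>y. g (x0 - y) \<partial>\<mu>) < e" using e by (simp add: dist_real_def)
    qed
  qed
qed

end

lemma C1_diff: "C1fun f \<Longrightarrow> f differentiable (at x)" by (simp add: C1fun_def)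
lemma C1_gradcont: "C1fun f \<Longrightarrow> continuous_on UNIV (grad f)" by (simp add: C1fun_def)
lemma C1_cont: "C1fun f \<Longrightarrow> continuous_on UNIV f"
  by (intro continuous_at_imp_continuous_on ballI differentiable_imp_continuous_within C1_diff)

lemma C1_gradcomp: "C1fun f \<Longrightarrow> continuous_on UNIV (\<lambda>z. grad f z $ i)"
  by (rule continuous_on_component[OF C1_gradcont])

context setting
begin

definition Hv :: "(real^'d \<Rightarrow> real) \<Rightarrow> real^'d \<Rightarrow> real^'d" where
  "Hv W x = (\<chi> i. \<integral>y. grad W (x - y) $ i \<partial>\<mu>)"

lemma Hv_cont: "C1fun W \<Longrightarrow> continuous_on UNIV (Hv W)"
  unfolding Hv_def by (intro continuous_on_vec_lambda int_cont C1_gradcomp)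

lemma Hv_inner:
  assumes W: "C1fun W"
  shows "Hv W x \<bullet> v = (\<integral>y. grad W (x - y) \<bullet> v \<partial>\<mu>)"
proof -
  have "Hv W x \<bullet> v = (\<Sum>i\<in>UNIV. (\<integral>y. grad W (x - y) $ i \<partial>\<mu>) * v $ i)"
    by (simp add: Hv_def inner_vec_def)
  also have "\<dots> = (\<Sum>i\<in>UNIV. (\<integral>y. grad W (x - y) $ i * v $ i \<partial>\<mu>))" by simp
  also have "\<dots> = (\<integral>y. (\<Sum>i\<in>UNIV. grad W (x - y) $ i * v $ i) \<partial>\<mu>)"
    by (rule Bochner_Integration.integral_sum[symmetric])
       (auto intro!: integrable_mult_left integrable_cont cont_shift C1_gradcomp W)
  also have "\<dots> = (\<integral>y. grad W (x - y) \<bullet> v \<partial>\<mu>)" by (simp add: inner_vec_def)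
  finally show ?thesis .
qed

lemma Q_grad:
  assumes V: "C1fun V" and W: "C1fun W"
  shows "grad (Qpot V W \<mu>) x = grad V x + Hv W x"
proof (rule grad_eq)
  let ?w = "grad V x + Hv W x"
  let ?Q = "Qpot V W \<mu>"
  let ?K = "cball (0::real^'d) (norm x + 1 + (Rb + real CARD('d)))"
  show "(?Q has_derivative (\<lambda>v. ?w \<bullet> v)) (at x)"
    unfolding has_derivative_at_alt
  proof (intro conjI allI impI)
    show "bounded_linear (\<lambda>v. ?w \<bullet> v)" by (rule bounded_linear_inner_right)
    fix e :: real assume e: "e > 0"
    have e2: "e/2 > 0" using e by simp
    have "\<exists>d>0. \<forall>y. norm (y - x) < d \<longrightarrow> norm (V y - V x - grad V x \<bullet> (y - x)) \<le> e/2 * norm (y - x)"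
      using grad_deriv[OF C1_diff[OF V]] e2 unfolding has_derivative_at_alt by blast
    then obtain d1 where d1: "d1 > 0 \<and> (\<forall>y. norm (y - x) < d1 \<longrightarrow> norm (V y - V x - grad V x \<bullet> (y - x)) \<le> e/2 * norm (y - x))"
      by (rule exE)
    have "\<exists>\<delta>>0. \<forall>p\<in>?K. \<forall>q\<in>?K. dist p q < \<delta> \<longrightarrow> \<bar>W q - W p - grad W p \<bullet> (q - p)\<bar> \<le> e/2 * norm (q - p)"
      by (rule mvt_unif[OF W compact_cball convex_cball e2])
    then obtain d2 where d2: "d2 > 0 \<and> (\<forall>p\<in>?K. \<forall>q\<in>?K. dist p q < d2 \<longrightarrow> \<bar>W q - W p - grad W p \<bullet> (q - p)\<bar> \<le> e/2 * norm (q - p))"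
      by (rule exE)
    show "\<exists>d>0. \<forall>y. norm (y - x) < d \<longrightarrow> norm (?Q y - ?Q x - ?w \<bullet> (y - x)) \<le> e * norm (y - x)"
    proof (intro exI[of _ "min 1 (min d1 d2)"] conjI allI impI)
      show "0 < min 1 (min d1 d2)" using d1 d2 by simp
      fix y assume y: "norm (y - x) < min 1 (min d1 d2)"
      have Vp: "\<bar>V y - V x - grad V x \<bullet> (y - x)\<bar> \<le> e/2 * norm (y - x)"
        using d1 y by auto
      let ?p = "\<lambda>z. W (y - z) - W (x - z) - grad W (x - z) \<bullet> (y - x)"
      have cW: "continuous_on UNIV W" by (rule C1_cont[OF W])
      have cgW: "continuous_on UNIV (grad W)" by (rule C1_gradcont[OF W])
      have cp: "continuous_on UNIV ?p"
      proof -
        have c1: "continuous_on UNIV (\<lambda>z. W (y - z))" by (rule cont_shift[OF cW])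
        have c2: "continuous_on UNIV (\<lambda>z. W (x - z))" by (rule cont_shift[OF cW])
        have "continuous_on UNIV (\<lambda>z. x - z)" by (intro continuous_on_diff continuous_on_const continuous_on_id)
        then have c3: "continuous_on UNIV (\<lambda>z. grad W (x - z))" by (rule continuous_on_compose2[OF cgW _ subset_UNIV])
        show ?thesis by (intro continuous_on_diff c1 c2 continuous_on_inner c3 continuous_on_const)
      qed
      have Wp: "\<bar>(\<integral>z. ?p z \<partial>\<mu>) - (\<integral>z. 0 \<partial>\<mu>)\<bar> \<le> e/2 * norm (y - x)"
      proof (rule int_close[OF cp continuous_on_const])
        fix z assume "z \<in> \<Omega>"
        then have nz: "norm z \<le> Rb + real CARD('d)" using \<Omega>_K1 by auto
        have ny: "norm y \<le> norm x + 1" using y norm_triangle_sub[of y x] by simp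
        have k1: "x - z \<in> ?K" using nz norm_triangle_ineq4[of x z] by simp
        have k2: "y - z \<in> ?K" using nz ny norm_triangle_ineq4[of y z] by simp
        have "dist (x - z) (y - z) < d2" using y by (simp add: dist_norm norm_minus_commute)
        then have "\<bar>W (y - z) - W (x - z) - grad W (x - z) \<bullet> ((y - z) - (x - z))\<bar> \<le> e/2 * norm ((y - z) - (x - z))"
          using d2 k1 k2 by blast
        then show "\<bar>?p z - 0\<bar> \<le> e/2 * norm (y - x)" by simp
      qed
      have iW1: "integrable \<mu> (\<lambda>z. W (y - z))" by (rule integrable_cont[OF cont_shift[OF cW]])
      have iW2: "integrable \<mu> (\<lambda>z. W (x - z))" by (rule integrable_cont[OF cont_shift[OF cW]])
      have iW3: "integrable \<mu> (\<lambda>z. grad W (x - z) \<bullet> (y - x))"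
        by (rule integrable_cont) (intro continuous_on_inner continuous_on_const continuous_on_compose2[OF cgW _ subset_UNIV] continuous_on_diff continuous_on_id)
      have "(\<integral>z. ?p z \<partial>\<mu>) = (\<integral>z. W (y - z) \<partial>\<mu>) - (\<integral>z. W (x - z) \<partial>\<mu>) - (\<integral>z. grad W (x - z) \<bullet> (y - x) \<partial>\<mu>)"
        using iW1 iW2 iW3 by (simp add: Bochner_Integration.integral_diff)
      also have "(\<integral>z. grad W (x - z) \<bullet> (y - x) \<partial>\<mu>) = Hv W x \<bullet> (y - x)" by (rule Hv_inner[OF W, symmetric])
      finally have Ip: "(\<integral>z. ?p z \<partial>\<mu>) = (\<integral>z. W (y - z) \<partial>\<mu>) - (\<integral>z. W (x - z) \<partial>\<mu>) - Hv W x \<bullet> (y - x)" .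
      have "?Q y - ?Q x - ?w \<bullet> (y - x) = (V y - V x - grad V x \<bullet> (y - x)) + (\<integral>z. ?p z \<partial>\<mu>)"
        unfolding Ip Qpot_def by (simp add: inner_add_left algebra_simps)
      then have "norm (?Q y - ?Q x - ?w \<bullet> (y - x)) \<le> \<bar>V y - V x - grad V x \<bullet> (y - x)\<bar> + \<bar>\<integral>z. ?p z \<partial>\<mu>\<bar>"
        by simp
      also have "\<dots> \<le> e/2 * norm (y - x) + e/2 * norm (y - x)" using Vp Wp by simp
      finally show "norm (?Q y - ?Q x - ?w \<bullet> (y - x)) \<le> e * norm (y - x)" by simp
    qed
  qed
qed


lemma q_apx:
  assumes V: "C1fun V" and W: "C1fun W" and e: "e > 0"
  shows "eventually (\<lambda>h. \<forall>(k,l)\<in>E h. \<bar>qflux V W \<Omega> h (a h) (\<rho>h h) k l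
            - (grad V (ctr h k) + Hv W (ctr h k)) \<bullet> (ctr h l - ctr h k)\<bar> \<le> e * h) (at_right 0)"
proof -
  have e3: "e/3 > 0" using e by simp
  have cpos: "real CARD('d) > 0" by simp
  have e3d: "e / (3 * real CARD('d)) > 0" using e cpos by simp
  have "\<exists>\<delta>>0. \<forall>p\<in>K1. \<forall>q\<in>K1. dist p q < \<delta> \<longrightarrow> \<bar>V q - V p - grad V p \<bullet> (q - p)\<bar> \<le> e/3 * norm (q - p)"
    by (rule mvt_unif[OF V compact_cball convex_cball e3])
  then obtain dV where dV: "dV > 0 \<and> (\<forall>p\<in>K1. \<forall>q\<in>K1. dist p q < dV \<longrightarrow> \<bar>V q - V p - grad V p \<bullet> (q - p)\<bar> \<le> e/3 * norm (q - p))"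
    by (rule exE)
  have "\<exists>\<delta>>0. \<forall>p\<in>K2. \<forall>q\<in>K2. dist p q < \<delta> \<longrightarrow> \<bar>W q - W p - grad W p \<bullet> (q - p)\<bar> \<le> e/3 * norm (q - p)"
    by (rule mvt_unif[OF W compact_cball convex_cball e3])
  then obtain dW where dW: "dW > 0 \<and> (\<forall>p\<in>K2. \<forall>q\<in>K2. dist p q < dW \<longrightarrow> \<bar>W q - W p - grad W p \<bullet> (q - p)\<bar> \<le> e/3 * norm (q - p))"
    by (rule exE)
  have evU: "eventually (\<lambda>h. \<forall>i. \<forall>x\<in>K1. \<bar>(\<Sum>m\<in>cl h. \<rho>h h m * grad W (x - ctr h m) $ i) - (\<integral>y. grad W (x - y) $ i \<partial>\<mu>)\<bar>
              \<le> e / (3 * real CARD('d))) (at_right 0)"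
    by (rule eventually_all_finite) (rule lemU[OF C1_gradcomp[OF W] e3d])
  have evh: "eventually (\<lambda>h::real. 0 < h \<and> h < min 1 (min dV dW)) (at_right 0)"
    unfolding eventually_at_right_field using dV dW by (intro exI[of _ "min 1 (min dV dW)"]) auto
  show ?thesis using evU evh
  proof eventually_elim
    case (elim h)
    have h: "0 < h" "h \<le> 1" "h < dV" "h < dW" using elim(2) by auto
    show ?case
    proof (clarify)
      fix k l assume kl: "(k,l) \<in> E h"
      have k: "k \<in> cl h" and l: "l \<in> cl h" and ln: "l \<in> nbrs k" using kl by (auto simp: edges_eq)
      have ck: "ctr h k \<in> K1" and cl: "ctr h l \<in> K1" using ctr_in_K1 h k l by auto
      have dkl: "dist (ctr h k) (ctr h l) = h" by (rule ctr_dist[OF ln h(1)])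
      let ?u = "ctr h l - ctr h k"
      have nu: "norm ?u = h" using dkl by (simp add: dist_norm norm_minus_commute)
      have fin: "finite (cl h)" by (rule finite_cl[OF h(1)])
      have nn: "\<And>m. m \<in> cl h \<Longrightarrow> 0 \<le> \<rho>h h m" using \<rho>_nn[OF h(1)] by auto
      have sum1: "(\<Sum>m\<in>cl h. \<rho>h h m) = 1" by (rule \<rho>_sum[OF h(1)])
      have P1: "\<bar>V (ctr h l) - V (ctr h k) - grad V (ctr h k) \<bullet> ?u\<bar> \<le> e/3 * h"
      proof -
        have "dist (ctr h k) (ctr h l) < dV" using dkl h(3) by simp
        then have "\<bar>V (ctr h l) - V (ctr h k) - grad V (ctr h k) \<bullet> ?u\<bar> \<le> e/3 * norm ?u"
          using dV ck cl by blast
        then show ?thesis using nu by simp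
      qed
      let ?A = "\<Sum>m\<in>cl h. \<rho>h h m * (grad W (ctr h k - ctr h m) \<bullet> ?u)"
      have P2: "\<bar>(\<Sum>m\<in>cl h. \<rho>h h m * (W (ctr h l - ctr h m) - W (ctr h k - ctr h m))) - ?A\<bar> \<le> e/3 * h"
      proof -
        have "\<bar>(\<Sum>m\<in>cl h. \<rho>h h m * (W (ctr h l - ctr h m) - W (ctr h k - ctr h m))) - ?A\<bar>
            = \<bar>\<Sum>m\<in>cl h. \<rho>h h m * (W (ctr h l - ctr h m) - W (ctr h k - ctr h m) - grad W (ctr h k - ctr h m) \<bullet> ?u)\<bar>"
          by (simp add: sum_subtractf right_diff_distrib)
        also have "\<dots> \<le> (\<Sum>m\<in>cl h. \<bar>\<rho>h h m * (W (ctr h l - ctr h m) - W (ctr h k - ctr h m) - grad W (ctr h k - ctr h m) \<bullet> ?u)\<bar>)"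
          by (rule sum_abs)
        also have "\<dots> \<le> (\<Sum>m\<in>cl h. \<rho>h h m * (e/3 * h))"
        proof (rule sum_mono)
          fix m assume m: "m \<in> cl h"
          have cm: "ctr h m \<in> K1" using ctr_in_K1 h m by auto
          have p: "ctr h k - ctr h m \<in> K2" and q: "ctr h l - ctr h m \<in> K2"
            using K2_diff[OF ck cm] K2_diff[OF cl cm] by auto
          have "dist (ctr h k - ctr h m) (ctr h l - ctr h m) < dW" using dkl h(4) by (simp add: dist_norm)
          then have "\<bar>W (ctr h l - ctr h m) - W (ctr h k - ctr h m) - grad W (ctr h k - ctr h m) \<bullet> ((ctr h l - ctr h m) - (ctr h k - ctr h m))\<bar>
                \<le> e/3 * norm ((ctr h l - ctr h m) - (ctr h k - ctr h m))"
            using dW p q by blast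
          then have "\<bar>W (ctr h l - ctr h m) - W (ctr h k - ctr h m) - grad W (ctr h k - ctr h m) \<bullet> ?u\<bar> \<le> e/3 * h"
            using nu by simp
          then have "\<rho>h h m * \<bar>W (ctr h l - ctr h m) - W (ctr h k - ctr h m) - grad W (ctr h k - ctr h m) \<bullet> ?u\<bar> \<le> \<rho>h h m * (e/3 * h)"
            by (rule mult_left_mono) (rule nn[OF m])
          then show "\<bar>\<rho>h h m * (W (ctr h l - ctr h m) - W (ctr h k - ctr h m) - grad W (ctr h k - ctr h m) \<bullet> ?u)\<bar> \<le> \<rho>h h m * (e/3 * h)"
            using nn[OF m] by (simp add: abs_mult)
        qed
        also have "\<dots> = (\<Sum>m\<in>cl h. \<rho>h h m) * (e/3 * h)" by (rule sum_distrib_right[symmetric])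
        also have "\<dots> = e/3 * h" using sum1 by simp
        finally show ?thesis .
      qed
      \<comment> \<open>(iii) replacing the empirical sum by the integral\<close>
      have P3: "\<bar>?A - Hv W (ctr h k) \<bullet> ?u\<bar> \<le> e/3 * h"
      proof -
        let ?D = "\<lambda>i. (\<Sum>m\<in>cl h. \<rho>h h m * grad W (ctr h k - ctr h m) $ i) - (\<integral>y. grad W (ctr h k - y) $ i \<partial>\<mu>)"
        have "?A = (\<Sum>m\<in>cl h. \<Sum>i\<in>UNIV. \<rho>h h m * grad W (ctr h k - ctr h m) $ i * ?u $ i)"
          by (simp add: inner_vec_def sum_distrib_left mult.assoc)
        also have "\<dots> = (\<Sum>i\<in>UNIV. \<Sum>m\<in>cl h. \<rho>h h m * grad W (ctr h k - ctr h m) $ i * ?u $ i)"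
          by (rule sum.swap)
        also have "\<dots> = (\<Sum>i\<in>UNIV. (\<Sum>m\<in>cl h. \<rho>h h m * grad W (ctr h k - ctr h m) $ i) * ?u $ i)"
          by (simp add: sum_distrib_right)
        finally have Aeq: "?A = (\<Sum>i\<in>UNIV. (\<Sum>m\<in>cl h. \<rho>h h m * grad W (ctr h k - ctr h m) $ i) * ?u $ i)" .
        have Heq: "Hv W (ctr h k) \<bullet> ?u = (\<Sum>i\<in>UNIV. (\<integral>y. grad W (ctr h k - y) $ i \<partial>\<mu>) * ?u $ i)"
          by (simp add: Hv_def inner_vec_def)
        have "?A - Hv W (ctr h k) \<bullet> ?u = (\<Sum>i\<in>UNIV. ?D i * ?u $ i)"
          unfolding Aeq Heq by (simp add: sum_subtractf left_diff_distrib)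
        then have "\<bar>?A - Hv W (ctr h k) \<bullet> ?u\<bar> \<le> (\<Sum>i\<in>UNIV. \<bar>?D i * ?u $ i\<bar>)"
          by (simp add: sum_abs)
        also have "\<dots> \<le> (\<Sum>i\<in>(UNIV::'d set). e / (3 * real CARD('d)) * h)"
        proof (rule sum_mono)
          fix i
          have Di: "\<bar>?D i\<bar> \<le> e / (3 * real CARD('d))" using elim(1) ck by blast
          have ui: "\<bar>?u $ i\<bar> \<le> h" using component_le_norm_cart[of ?u i] nu by simp
          have "\<bar>?D i\<bar> * \<bar>?u $ i\<bar> \<le> e / (3 * real CARD('d)) * h"
            by (rule mult_mono[OF Di ui]) (use e3d in auto)
          then show "\<bar>?D i * ?u $ i\<bar> \<le> e / (3 * real CARD('d)) * h" by (simp add: abs_mult)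
        qed
        also have "\<dots> = e/3 * h" using cpos by simp
        finally show ?thesis .
      qed
      have "qflux V W \<Omega> h (a h) (\<rho>h h) k l - (grad V (ctr h k) + Hv W (ctr h k)) \<bullet> ?u
          = (V (ctr h l) - V (ctr h k) - grad V (ctr h k) \<bullet> ?u)
            + ((\<Sum>m\<in>cl h. \<rho>h h m * (W (ctr h l - ctr h m) - W (ctr h k - ctr h m))) - ?A)
            + (?A - Hv W (ctr h k) \<bullet> ?u)"
        by (simp add: qflux_def inner_add_left algebra_simps)
      then show "\<bar>qflux V W \<Omega> h (a h) (\<rho>h h) k l - (grad V (ctr h k) + Hv W (ctr h k)) \<bullet> ?u\<bar> \<le> e * h"
        using P1 P2 P3 unfolding abs_le_iff by linarith
    qed
  qed
qed

end

theorem theorem6p2: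
  fixes \<Omega> :: "(real^'d) set"
    and a :: "real \<Rightarrow> real^'d"
    and \<rho>h :: "real \<Rightarrow> int^'d \<Rightarrow> real"
    and \<mu> :: "(real^'d) measure"
    and V W :: "real^'d \<Rightarrow> real"
  assumes \<Omega>: "open \<Omega>" "bounded \<Omega>" "convex \<Omega>"
    and \<rho>h_prob: "\<And>h k. h > 0 \<Longrightarrow> k \<in> cells \<Omega> h (a h) \<Longrightarrow> \<rho>h h k \<ge> 0"
    and \<rho>h_sum: "\<And>h. h > 0 \<Longrightarrow> (\<Sum>k\<in>cells \<Omega> h (a h). \<rho>h h k) = 1"
    and \<mu>_prob: "prob_space \<mu>" "sets \<mu> = sets borel" "measure \<mu> \<Omega> = 1"
    and weak: "\<And>f :: real^'d \<Rightarrow> real. continuous_on UNIV f \<Longrightarrow> bounded (range f) \<Longrightarrow>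
        ((\<lambda>h. \<integral>x. f x \<partial>(rhohat \<Omega> h (a h) (\<rho>h h))) \<longlongrightarrow> (\<integral>x. f x \<partial>\<mu>)) (at_right 0)"
    and V: "\<exists>L. L-lipschitz_on UNIV V" "C1fun V" "bdd_below (range V)"
    and W: "\<And>x. W x \<ge> 0" "\<And>x. W (- x) = W x"
  shows
    "(\<forall>(\<phi> :: real^'d \<Rightarrow> real) (\<phi>h :: real \<Rightarrow> int^'d \<Rightarrow> real).
        C1fun \<phi> \<and> bounded (range \<phi>) \<and> bounded (range (grad \<phi>)) \<and>
        (\<forall>\<epsilon>>0. \<forall>\<^sub>F h in at_right 0. \<forall>(k,l)\<in>edges \<Omega> h (a h).
            \<bar>\<phi>h h l - \<phi>h h k - grad \<phi> (center h (a h) k) \<bullet> (center h (a h) l - center h (a h) k)\<bar>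
              \<le> \<epsilon> * h)
      \<longrightarrow> ((\<lambda>h. Rstar \<Omega> h (a h) (\<rho>h h) (gradbar (\<phi>h h)))
            \<longlongrightarrow> (1/2) * (LINT x:\<Omega>|\<mu>. (norm (grad \<phi> x))\<^sup>2)) (at_right 0))
     \<and> ((\<exists>L. L-lipschitz_on UNIV W) \<and> C1fun W
      \<longrightarrow> ((\<lambda>h. Dup V W \<Omega> h (a h) (\<rho>h h))
            \<longlongrightarrow> (1/2) * (LINT x:\<Omega>|\<mu>. (norm (grad (Qpot V W \<mu>) x))\<^sup>2)) (at_right 0))"
  proof -
  interpret S: setting \<mu> \<Omega> a \<rho>h
    by (rule setting.intro[OF \<mu>_prob(1) setting_axioms.intro[OF \<Omega>(1) \<Omega>(2) \<rho>h_prob \<rho>h_sum \<mu>_prob(2) \<mu>_prob(3) weak]])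
  show ?thesis
  proof (intro conjI allI impI)
    fix \<phi> :: "real^'d \<Rightarrow> real" and \<phi>h :: "real \<Rightarrow> int^'d \<Rightarrow> real"
    assume H: "C1fun \<phi> \<and> bounded (range \<phi>) \<and> bounded (range (grad \<phi>)) \<and>
        (\<forall>\<epsilon>>0. \<forall>\<^sub>F h in at_right 0. \<forall>(k,l)\<in>edges \<Omega> h (a h).
            \<bar>\<phi>h h l - \<phi>h h k - grad \<phi> (center h (a h) k) \<bullet> (center h (a h) l - center h (a h) k)\<bar>
              \<le> \<epsilon> * h)"
    show "((\<lambda>h. Rstar \<Omega> h (a h) (\<rho>h h) (gradbar (\<phi>h h)))
            \<longlongrightarrow> (1/2) * (LINT x:\<Omega>|\<mu>. (norm (grad \<phi> x))\<^sup>2)) (at_right 0)"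
    proof (rule S.lemA)
      show "continuous_on UNIV (grad \<phi>)" using H by (simp add: C1fun_def)
      fix \<epsilon> :: real assume "\<epsilon> > 0"
      then show "\<forall>\<^sub>F h in at_right 0. \<forall>(k,l)\<in>edges \<Omega> h (a h).
            \<bar>gradbar (\<phi>h h) k l - grad \<phi> (center h (a h) k) \<bullet> (center h (a h) l - center h (a h) k)\<bar> \<le> \<epsilon> * h"
        using H by (simp add: gradbar_def)
    qed
  next
    assume H2: "(\<exists>L. L-lipschitz_on UNIV W) \<and> C1fun W"
    then have W1: "C1fun W" by simp
    have V1: "C1fun V" using V(2) .
    have QG: "grad (Qpot V W \<mu>) = (\<lambda>x. grad V x + S.Hv W x)"
      by (rule ext, rule S.Q_grad[OF V1 W1])
    show "((\<lambda>h. Dup V W \<Omega> h (a h) (\<rho>h h))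
            \<longlongrightarrow> (1/2) * (LINT x:\<Omega>|\<mu>. (norm (grad (Qpot V W \<mu>) x))\<^sup>2)) (at_right 0)"
      unfolding Dup_def
    proof (rule S.lemA)
      show "continuous_on UNIV (grad (Qpot V W \<mu>))"
        unfolding QG by (intro continuous_on_add C1_gradcont[OF V1] S.Hv_cont[OF W1])
      fix \<epsilon> :: real assume "\<epsilon> > 0"
      then show "\<forall>\<^sub>F h in at_right 0. \<forall>(k,l)\<in>edges \<Omega> h (a h).
            \<bar>qflux V W \<Omega> h (a h) (\<rho>h h) k l - grad (Qpot V W \<mu>) (center h (a h) k) \<bullet> (center h (a h) l - center h (a h) k)\<bar> \<le> \<epsilon> * h"
        unfolding QG by (rule S.q_apx[OF V1 W1])
    qed
  qed
qed

end
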